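(* Let $A\in\mathbb{R}^{n\times d}$ have rows $a_1^\top,\dots,a_n^\top$, let $f_1,\dots,f_n:\mathbb{R}\to\mathbb{R}$ be convex and each $(1/\gamma)$-smooth with $\gamma>0$, and let $g:\mathbb{R}^d\to\mathbb{R}\cup\{+\infty\}$ be closed and $\mu$-strongly convex with $\mu>0$. Consider the saddle-point problem $\min_x\max_y \tilde F(x,y)$ with $\tilde{F}(x,y)=\frac1n\langle y,Ax\rangle+g(x)-\frac1n\sum_{i=1}^n f_i^*(y_i)$, and let $(x^*,y^* )$ be its (unique) saddle point. Let $\bar R=\max_i\|a_i\|_2$. Run the SDAPD method (described in the context) with $$\eta=\frac{1}{\bar R}\sqrt{\frac{\gamma}{n\mu}},\quad \tau=\frac{1}{\bar R}\sqrt{\frac{n\mu}{\gamma}},\quad \beta_t=\frac{1}{\bar R}\sqrt{\frac{\gamma}{n\mu}}\,\xi^t,\quad \xi=1+\frac{1}{n+\bar R\sqrt{n/(\mu\gamma)}},$$ and for $T\ge1$ define $\hat{x}^T=\frac{1}{B_{T-1}}\sum_{t=0}^{T-1}\beta_t\bar{x}^{t+1}$. Then there is a constant $\Delta_0\ge0$, independent of $T$ and depending only on the problem data ($\bar R$, $n$, $\mu$, $\gamma$, $A$, $f_i$, $g$), the initial point $(x^0,y^0)$ and $(x^*,y^* )$, such that for all $T\ge 1$ $$\mathbb{E}\|\hat{x}^T-x^*\|_2^2\le\frac{\Delta_0}{\xi^T-1}.$$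
   Context: $f_i^*$ is the convex conjugate of $f_i$; $\operatorname{prox}_h(u)=\arg\min_v\{h(v)+\frac12\|v-u\|_2^2\}$. SDAPD method: given $x^0\in\mathbb{R}^d$, $y^0\in\mathbb{R}^n$, $\eta,\tau>0$ and $\beta_t>0$, set $B_t=\sum_{k=0}^t\beta_k$. For $t=0,1,\dots$: sample $i_t$ uniformly from $\{1,\dots,n\}$, independently of the past; compute $\bar{x}^{t+1}=\operatorname{prox}_{\eta g}(x^t-\frac{\eta}{n}A^\top y^t)$; set $y^{t+1}_{i}=\operatorname{prox}_{\tau f_i^*}(y_i^t+\tau\langle a_i,\bar{x}^{t+1}\rangle)$ if $i=i_t$ and $y^{t+1}_i=y^t_i$ otherwise; set $\bar{y}^{t+1}=y^t+n(y^{t+1}-y^t)$; set $x^{t+1}=\operatorname{prox}_{B_t g}(x^0-s^{t+1})$ with $s^{t+1}=\sum_{k=0}^t\frac{\beta_k}{n}A^\top\bar{y}^{k+1}$. The expectation is over the random indices $i_0,i_1,\dots$. *)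

theory Defs
  imports "HOL-Analysis.Analysis"
begin

definition conj_fun :: "(real \<Rightarrow> real) \<Rightarrow> real \<Rightarrow> ereal" where
  "conj_fun f s = (SUP x. ereal (s * x - f x))"

definition prox :: "('a::real_normed_vector \<Rightarrow> ereal) \<Rightarrow> 'a \<Rightarrow> 'a" where
  "prox h u = (SOME v. \<forall>w. h v + ereal (norm (v - u)^2 / 2) \<le> h w + ereal (norm (w - u)^2 / 2))"

definition smooth_with :: "real \<Rightarrow> (real \<Rightarrow> real) \<Rightarrow> bool" where
  "smooth_with L f \<longleftrightarrow> (\<forall>x. f differentiable (at x)) \<and>
     (\<forall>x y. \<bar>deriv f x - deriv f y\<bar> \<le> L * \<bar>x - y\<bar>)"

definition closed_proper_fun :: "('a::topological_space \<Rightarrow> ereal) \<Rightarrow> bool" where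
  "closed_proper_fun g \<longleftrightarrow> (\<forall>x. g x \<noteq> -\<infinity>) \<and> (\<exists>x. g x < \<infinity>) \<and>
     closed {(x, t::real). g x \<le> ereal t}"

definition strongly_convex_ereal :: "real \<Rightarrow> ('a::real_normed_vector \<Rightarrow> ereal) \<Rightarrow> bool" where
  "strongly_convex_ereal \<mu> g \<longleftrightarrow> (\<forall>x y \<theta>. 0 < \<theta> \<and> \<theta> < 1 \<longrightarrow>
     g (\<theta> *\<^sub>R x + (1 - \<theta>) *\<^sub>R y) \<le>
       ereal \<theta> * g x + ereal (1 - \<theta>) * g y - ereal (\<mu> / 2 * \<theta> * (1 - \<theta>) * norm (x - y)^2))"

definition Ftil :: "real^'d^'n \<Rightarrow> ('n::finite \<Rightarrow> real \<Rightarrow> real) \<Rightarrow> (real^'d \<Rightarrow> ereal)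
    \<Rightarrow> real^'d \<Rightarrow> real^'n \<Rightarrow> ereal" where
  "Ftil A f g x y = ereal (inner y (A *v x) / real CARD('n)) + g x
      - (\<Sum>i\<in>UNIV. conj_fun (f i) (y $ i)) / ereal (real CARD('n))"

definition is_saddle :: "real^'d^'n \<Rightarrow> ('n::finite \<Rightarrow> real \<Rightarrow> real) \<Rightarrow> (real^'d \<Rightarrow> ereal)
    \<Rightarrow> real^'d \<Rightarrow> real^'n \<Rightarrow> bool" where
  "is_saddle A f g xs ys \<longleftrightarrow> g xs < \<infinity> \<and> (\<forall>i. conj_fun (f i) (ys $ i) < \<infinity>) \<and>
     (\<forall>x y. Ftil A f g xs y \<le> Ftil A f g xs ys \<and> Ftil A f g xs ys \<le> Ftil A f g x ys)"

definition Bsum :: "(nat \<Rightarrow> real) \<Rightarrow> nat \<Rightarrow> real" where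
  "Bsum \<beta> t = (\<Sum>k\<le>t. \<beta> k)"

fun sdapd_state :: "real^'d^'n \<Rightarrow> ('n::finite \<Rightarrow> real \<Rightarrow> real) \<Rightarrow> (real^'d \<Rightarrow> ereal)
    \<Rightarrow> real \<Rightarrow> real \<Rightarrow> (nat \<Rightarrow> real) \<Rightarrow> real^'d \<Rightarrow> real^'n \<Rightarrow> (nat \<Rightarrow> 'n)
    \<Rightarrow> nat \<Rightarrow> (real^'d) \<times> (real^'n) \<times> (real^'d)" where
  "sdapd_state A f g \<eta> \<tau> \<beta> x0 y0 I 0 = (x0, y0, 0)"
| "sdapd_state A f g \<eta> \<tau> \<beta> x0 y0 I (Suc t) =
    (let (x, y, s) = sdapd_state A f g \<eta> \<tau> \<beta> x0 y0 I t;
         n = real CARD('n);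
         xb = prox (\<lambda>v. ereal \<eta> * g v) (x - (\<eta> / n) *\<^sub>R (transpose A *v y));
         i = I t;
         y' = (\<chi> j. if j = i then prox (\<lambda>v. ereal \<tau> * conj_fun (f i) v) (y $ i + \<tau> * inner (A $ i) xb)
                     else y $ j);
         yb = y + n *\<^sub>R (y' - y);
         s' = s + (\<beta> t / n) *\<^sub>R (transpose A *v yb);
         x' = prox (\<lambda>v. ereal (Bsum \<beta> t) * g v) (x0 - s')
     in (x', y', s'))"

text \<open>xbar^{t+1}, computed from (x^t, y^t).\<close>
definition sdapd_xbar :: "real^'d^'n \<Rightarrow> ('n::finite \<Rightarrow> real \<Rightarrow> real) \<Rightarrow> (real^'d \<Rightarrow> ereal)
    \<Rightarrow> real \<Rightarrow> real \<Rightarrow> (nat \<Rightarrow> real) \<Rightarrow> real^'d \<Rightarrow> real^'n \<Rightarrow> (nat \<Rightarrow> 'n)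
    \<Rightarrow> nat \<Rightarrow> real^'d" where
  "sdapd_xbar A f g \<eta> \<tau> \<beta> x0 y0 I t =
    (let (x, y, s) = sdapd_state A f g \<eta> \<tau> \<beta> x0 y0 I t
     in prox (\<lambda>v. ereal \<eta> * g v) (x - (\<eta> / real CARD('n)) *\<^sub>R (transpose A *v y)))"

definition sdapd_xhat :: "real^'d^'n \<Rightarrow> ('n::finite \<Rightarrow> real \<Rightarrow> real) \<Rightarrow> (real^'d \<Rightarrow> ereal)
    \<Rightarrow> real \<Rightarrow> real \<Rightarrow> (nat \<Rightarrow> real) \<Rightarrow> real^'d \<Rightarrow> real^'n \<Rightarrow> (nat \<Rightarrow> 'n)
    \<Rightarrow> nat \<Rightarrow> real^'d" where
  "sdapd_xhat A f g \<eta> \<tau> \<beta> x0 y0 I T =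
     (1 / Bsum \<beta> (T - 1)) *\<^sub>R (\<Sum>t<T. \<beta> t *\<^sub>R sdapd_xbar A f g \<eta> \<tau> \<beta> x0 y0 I t)"

text \<open>Expectation over i_0, ..., i_{T-1} i.i.d. uniform on the index type: average over all
  index lists of length T.\<close>
definition expect_idx :: "nat \<Rightarrow> ((nat \<Rightarrow> 'n::finite) \<Rightarrow> real) \<Rightarrow> real" where
  "expect_idx T h = (\<Sum>xs\<in>{xs::'n list. length xs = T}. h (\<lambda>k. xs ! k)) / real CARD('n) ^ T"

end

theory Submission
  imports Defs
begin
lemma limit_theta:
  fixes a b K :: real
  assumes "K \<ge> 0" and "\<And>\<theta>. 0 < \<theta> \<Longrightarrow> \<theta> < 1 \<Longrightarrow> a \<le> b - (1 - \<theta>) * K"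
  shows "a + K \<le> b"
proof (rule ccontr)
  assume "\<not> a + K \<le> b"
  hence eps: "a + K - b > 0" by simp
  hence Kp: "K > 0" using assms(2)[of "1/2"] by auto
  define \<theta> where "\<theta> = min (1/2) ((a + K - b) / (2*K))"
  have t0: "0 < \<theta>" "\<theta> < 1" using eps Kp by (auto simp: \<theta>_def)
  have "\<theta> * K \<le> (a + K - b) / 2"
  proof -
    have "\<theta> \<le> (a + K - b) / (2*K)" by (simp add: \<theta>_def)
    hence "\<theta> * K \<le> (a + K - b) / (2*K) * K" using Kp by (intro mult_right_mono) auto
    also have "\<dots> = (a + K - b) / 2" using Kp by (simp add: field_simps)
    finally show ?thesis .
  qed
  moreover have "a \<le> b - (1 - \<theta>) * K" using assms(2) t0 by auto
  ultimately show False using eps by (simp add: algebra_simps)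
qed

lemma sc_min:
  fixes g :: "'a::real_inner \<Rightarrow> ereal" and q :: "'a \<Rightarrow> real"
  assumes sc: "strongly_convex_ereal \<mu> g" and mu: "\<mu> \<ge> 0"
    and notm: "\<And>x. g x \<noteq> -\<infinity>" and c: "c > 0" and k: "k \<ge> 0"
    and q: "\<And>a b \<theta>. 0 < \<theta> \<Longrightarrow> \<theta> < 1 \<Longrightarrow>
        q (\<theta> *\<^sub>R a + (1 - \<theta>) *\<^sub>R b) \<le> \<theta> * q a + (1 - \<theta>) * q b - k/2 * \<theta> * (1 - \<theta>) * (norm (a - b))^2"
    and vfin: "g v < \<infinity>"
    and vmin: "\<And>w. ereal c * g v + ereal (q v) \<le> ereal c * g w + ereal (q w)"
    and wfin: "g w < \<infinity>"
  shows "c * real_of_ereal (g v) + q v + (c * \<mu> + k) / 2 * (norm (w - v))^2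
           \<le> c * real_of_ereal (g w) + q w"
proof -
  obtain Gv where Gv: "g v = ereal Gv" using vfin notm[of v] by (cases "g v") auto
  obtain Gw where Gw: "g w = ereal Gw" using wfin notm[of w] by (cases "g w") auto
  define D where "D = (norm (w - v))^2"
  have D0: "D \<ge> 0" by (simp add: D_def)
  have "c * Gv + q v + (c * \<mu> + k) / 2 * D \<le> c * Gw + q w"
  proof (rule limit_theta)
    show "0 \<le> (c * \<mu> + k) / 2 * D" using c mu k D0 by simp
  next
    fix \<theta> :: real assume t: "0 < \<theta>" "\<theta> < 1"
    define z where "z = \<theta> *\<^sub>R w + (1 - \<theta>) *\<^sub>R v"
    have "g z \<le> ereal \<theta> * g w + ereal (1 - \<theta>) * g v - ereal (\<mu> / 2 * \<theta> * (1 - \<theta>) * norm (w - v)^2)"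
      using sc t unfolding strongly_convex_ereal_def z_def by blast
    also have "\<dots> = ereal (\<theta> * Gw + (1 - \<theta>) * Gv - \<mu> / 2 * \<theta> * (1 - \<theta>) * D)"
      by (simp add: Gv Gw D_def)
    finally have gz: "g z \<le> ereal (\<theta> * Gw + (1 - \<theta>) * Gv - \<mu> / 2 * \<theta> * (1 - \<theta>) * D)" .
    then obtain Gz where Gz: "g z = ereal Gz" using notm[of z] by (cases "g z") auto
    have Gzle: "Gz \<le> \<theta> * Gw + (1 - \<theta>) * Gv - \<mu> / 2 * \<theta> * (1 - \<theta>) * D" using gz Gz by simp
    have "c * Gv + q v \<le> c * Gz + q z" using vmin[of z] by (simp add: Gv Gz)
    also have "\<dots> \<le> c * (\<theta> * Gw + (1 - \<theta>) * Gv - \<mu> / 2 * \<theta> * (1 - \<theta>) * D)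
        + (\<theta> * q w + (1 - \<theta>) * q v - k/2 * \<theta> * (1 - \<theta>) * D)"
      using Gzle c q[OF t, of w v] unfolding z_def D_def by (intro add_mono) auto
    finally have "\<theta> * (c * Gv + q v) \<le> \<theta> * (c * Gw + q w - (1 - \<theta>) * ((c * \<mu> + k) / 2 * D))"
      by (simp add: algebra_simps add_divide_distrib diff_divide_distrib)
    thus "c * Gv + q v \<le> c * Gw + q w - (1 - \<theta>) * ((c * \<mu> + k) / 2 * D)"
      using t by simp
  qed
  thus ?thesis by (simp add: Gv Gw D_def)
qed

lemma norm_convex_comb_sq:
  fixes x y :: "'a::real_inner"
  shows "(norm (\<theta> *\<^sub>R x + (1 - \<theta>) *\<^sub>R y))^2
       = \<theta> * (norm x)^2 + (1 - \<theta>) * (norm y)^2 - \<theta> * (1 - \<theta>) * (norm (x - y))^2"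
  unfolding power2_norm_eq_inner
  by (simp add: inner_add_left inner_add_right inner_diff_left inner_diff_right
      inner_commute algebra_simps)

lemma q_sq:
  fixes u :: "'a::real_inner"
  assumes "0 < \<theta>" "\<theta> < 1"
  shows "(norm (\<theta> *\<^sub>R a + (1 - \<theta>) *\<^sub>R b - u))^2 / 2
    \<le> \<theta> * ((norm (a - u))^2 / 2) + (1 - \<theta>) * ((norm (b - u))^2 / 2) - 1/2 * \<theta> * (1 - \<theta>) * (norm (a - b))^2"
proof -
  have e: "\<theta> *\<^sub>R a + (1 - \<theta>) *\<^sub>R b - u = \<theta> *\<^sub>R (a - u) + (1 - \<theta>) *\<^sub>R (b - u)"
    by (simp add: algebra_simps)
  have e2: "(a - u) - (b - u) = a - b" by simp
  show ?thesis unfolding e using norm_convex_comb_sq[of \<theta> "a - u" "b - u"] unfolding e2 by simp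
qed

lemma q_lin:
  fixes p :: "'a::real_inner"
  shows "inner p (\<theta> *\<^sub>R a + (1 - \<theta>) *\<^sub>R b) \<le> \<theta> * inner p a + (1 - \<theta>) * inner p b - 0/2 * \<theta> * (1 - \<theta>) * (norm (a - b))^2"
  by (simp add: inner_add_right)

lemma sqrt_bound_aux:
  fixes r a b :: real
  assumes "r \<ge> 0" "a \<ge> 0" "b \<ge> 0" "r^2 / 2 \<le> a * r + b"
  shows "r \<le> max 1 (2 * (a + b))"
proof (cases "r \<le> 1")
  case False
  have "b \<le> b * r" using mult_left_mono[of 1 r b] False assms by simp
  hence "r^2/2 \<le> (a + b) * r" using assms by (simp add: algebra_simps)
  hence "r / 2 \<le> a + b" using False by (simp add: power2_eq_square)
  thus ?thesis by simp
qed simp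

lemma prox_exists:
  fixes g :: "'a::{real_inner,heine_borel} \<Rightarrow> ereal"
  assumes cl: "closed_proper_fun g" and c: "c > 0"
    and lb: "\<And>x. ereal (a0 + inner p x) \<le> g x"
  shows "g (prox (\<lambda>v. ereal c * g v) u) < \<infinity>
    \<and> (\<forall>w. ereal c * g (prox (\<lambda>v. ereal c * g v) u) + ereal (norm (prox (\<lambda>v. ereal c * g v) u - u)^2 / 2)
          \<le> ereal c * g w + ereal (norm (w - u)^2 / 2))"
proof -
  define \<phi> where "\<phi> w = ereal c * g w + ereal (norm (w - u)^2 / 2)" for w
  have notm: "g x \<noteq> -\<infinity>" for x using cl unfolding closed_proper_fun_def by auto
  obtain x1 where x1: "g x1 < \<infinity>" using cl unfolding closed_proper_fun_def by auto
  have clE: "closed {(x, t::real). g x \<le> ereal t}" using cl unfolding closed_proper_fun_def by auto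
  define ql where "ql w = c * (a0 + inner p w) + norm (w - u)^2 / 2" for w
  have phi_ge: "ereal (ql w) \<le> \<phi> w" for w
  proof -
    have "ereal c * ereal (a0 + inner p w) \<le> ereal c * g w"
      using lb[of w] c by (intro ereal_mult_left_mono) auto
    hence "ereal (c * (a0 + inner p w)) + ereal (norm (w - u)^2 / 2) \<le> ereal c * g w + ereal (norm (w - u)^2 / 2)"
      by (intro add_right_mono) simp
    thus ?thesis unfolding \<phi>_def ql_def by simp
  qed
  define lb0 where "lb0 = c * a0 + c * inner p u - c * norm p * (c * norm p) / 2"
  have ql_lb: "lb0 \<le> ql w" for w
  proof -
    have "inner p (w - u) \<ge> - (norm p * norm (w - u))"
      using Cauchy_Schwarz_ineq2[of p "w - u"] by linarith
    hence "inner p w \<ge> inner p u - norm p * norm (w - u)" by (simp add: inner_diff_right)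
    hence "c * (inner p u - norm p * norm (w - u)) \<le> c * inner p w" using c by (intro mult_left_mono) auto
    hence "c * inner p w \<ge> c * inner p u - c * norm p * norm (w - u)" by (simp add: algebra_simps)
    moreover have "0 \<le> (norm (w - u) - c * norm p)^2" by simp
    ultimately show ?thesis unfolding ql_def lb0_def by (simp add: power2_eq_square algebra_simps)
  qed
  define m where "m = Inf (range \<phi>)"
  have m_le: "m \<le> \<phi> w" for w unfolding m_def by (rule Inf_lower) simp
  have m_ge: "ereal lb0 \<le> m" unfolding m_def
  proof (rule Inf_greatest)
    fix y assume "y \<in> range \<phi>"
    then obtain w where "y = \<phi> w" by auto
    moreover have "ereal lb0 \<le> ereal (ql w)" using ql_lb[of w] by simp
    ultimately show "ereal lb0 \<le> y" using phi_ge[of w] by (meson order_trans)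
  qed
  have "\<phi> x1 < \<infinity>" using x1 c notm[of x1] unfolding \<phi>_def by (cases "g x1") auto
  hence "m < \<infinity>" using m_le[of x1] by auto
  then obtain M where M: "m = ereal M" using m_ge by (cases m) auto
  have "\<exists>w. \<phi> w < ereal (M + 1 / (real k + 1))" for k :: nat
  proof -
    have "m < ereal (M + 1 / (real k + 1))" using M by simp
    thus ?thesis unfolding m_def by (simp add: Inf_less_iff)
  qed
  then obtain ws where ws: "\<And>k. \<phi> (ws k) < ereal (M + 1 / (real k + 1))" by metis
  have bnd: "norm (ws k - u) \<le> max 1 (2 * (c * norm p + \<bar>M + 1 - c * a0 - c * inner p u\<bar>))" for k
  proof -
    have "ereal (ql (ws k)) < ereal (M + 1 / (real k + 1))" using phi_ge ws le_less_trans by blast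
    hence "ql (ws k) < M + 1 / (real k + 1)" by simp
    moreover have "1 / (real k + 1) \<le> 1" by (simp add: divide_le_eq)
    ultimately have "ql (ws k) \<le> M + 1" by linarith
    hence h: "norm (ws k - u)^2 / 2 \<le> M + 1 - c * a0 - c * inner p (ws k)" unfolding ql_def by (simp add: algebra_simps)
    have "inner p (ws k - u) \<ge> - (norm p * norm (ws k - u))"
      using Cauchy_Schwarz_ineq2[of p "ws k - u"] by linarith
    hence "inner p u \<le> inner p (ws k) + norm p * norm (ws k - u)" by (simp add: inner_diff_right)
    hence "c * inner p u \<le> c * (inner p (ws k) + norm p * norm (ws k - u))" using c by (intro mult_left_mono) auto
    hence "- c * inner p (ws k) \<le> - c * inner p u + c * norm p * norm (ws k - u)"
      by (simp add: algebra_simps)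
    hence "norm (ws k - u)^2 / 2 \<le> (c * norm p) * norm (ws k - u) + \<bar>M + 1 - c * a0 - c * inner p u\<bar>"
      using h abs_ge_self[of "M + 1 - c * a0 - c * inner p u"] by (simp add: algebra_simps)
    thus ?thesis by (intro sqrt_bound_aux) (use c in auto)
  qed
  have "bounded (range ws)"
    unfolding bounded_iff
    apply (rule exI[of _ "norm u + max 1 (2 * (c * norm p + \<bar>M + 1 - c * a0 - c * inner p u\<bar>))"])
    using bnd norm_triangle_ineq4 by (smt (verit) norm_minus_commute norm_triangle_sub rangeE)
  then obtain l r where r: "strict_mono (r :: nat \<Rightarrow> nat)" and lim: "(ws \<circ> r) \<longlonglongrightarrow> l"
    using bounded_imp_convergent_subsequence by blast
  define E where "E = {(w, t::real). \<phi> w \<le> ereal t}"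
  have Eeq: "E = (\<lambda>z. (fst z, (snd z - norm (fst z - u)^2 / 2) / c)) -` {(x, t::real). g x \<le> ereal t}"
  proof -
    have "\<phi> w \<le> ereal t \<longleftrightarrow> g w \<le> ereal ((t - norm (w - u)^2 / 2) / c)" for w t
    proof (cases "g w")
      case (real G)
      have "ereal c * ereal G + ereal (norm (w - u)^2 / 2) \<le> ereal t \<longleftrightarrow> c * G + norm (w - u)^2 / 2 \<le> t" by simp
      also have "\<dots> \<longleftrightarrow> G \<le> (t - norm (w - u)^2 / 2) / c" using c by (simp add: pos_le_divide_eq algebra_simps)
      finally show ?thesis using real unfolding \<phi>_def by simp
    next
      case PInf thus ?thesis using c unfolding \<phi>_def by simp
    next
      case MInf thus ?thesis using notm by simp
    qed
    thus ?thesis unfolding E_def by auto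
  qed
  have cE: "closed E" unfolding Eeq
    by (intro continuous_closed_vimage clE) (intro continuous_intros, use c in auto)
  have memE: "(ws (r k), M + 1 / (real (r k) + 1)) \<in> E" for k
    using ws[of "r k"] unfolding E_def by auto
  have limE: "(\<lambda>k. (ws (r k), M + 1 / (real (r k) + 1))) \<longlonglongrightarrow> (l, M)"
  proof (intro tendsto_Pair)
    show "(\<lambda>k. ws (r k)) \<longlonglongrightarrow> l" using lim by (simp add: o_def)
    have "(\<lambda>k. 1 / (real k + 1)) \<longlonglongrightarrow> 0" using LIMSEQ_inverse_real_of_nat by (simp add: inverse_eq_divide add.commute)
    hence "(\<lambda>k. 1 / (real (r k) + 1)) \<longlonglongrightarrow> 0" using LIMSEQ_subseq_LIMSEQ[OF _ r] by (simp add: o_def)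
    from tendsto_add[OF tendsto_const[of M] this] show "(\<lambda>k. M + 1 / (real (r k) + 1)) \<longlonglongrightarrow> M" by simp
  qed
  have "(l, M) \<in> E" by (rule closed_sequentially[OF cE memE limE])
  hence "\<phi> l \<le> ereal M" unfolding E_def by simp
  hence lmin: "\<phi> l \<le> \<phi> w" for w using m_le[of w] M by simp
  define P where "P v = (\<forall>w. ereal c * g v + ereal (norm (v - u)^2 / 2) \<le> ereal c * g w + ereal (norm (w - u)^2 / 2))" for v
  have "P l" unfolding P_def using lmin unfolding \<phi>_def by blast
  hence pm: "P (prox (\<lambda>v. ereal c * g v) u)"
    unfolding prox_def P_def[symmetric] by (rule someI)
  define v where "v = prox (\<lambda>v. ereal c * g v) u"
  have "ereal c * g v + ereal (norm (v - u)^2 / 2) \<le> \<phi> x1"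
    using pm unfolding P_def v_def[symmetric] \<phi>_def by blast
  hence lt: "ereal c * g v + ereal (norm (v - u)^2 / 2) < \<infinity>" using \<open>\<phi> x1 < \<infinity>\<close> by (rule le_less_trans)
  have "g v < \<infinity>"
  proof (rule ccontr)
    assume "\<not> g v < \<infinity>"
    hence "g v = \<infinity>" by simp
    hence "ereal c * g v + ereal (norm (v - u)^2 / 2) = \<infinity>" using c by simp
    thus False using lt by simp
  qed
  with pm show ?thesis unfolding P_def v_def by blast
qed

lemma prox_g:
  fixes g :: "'a::{real_inner,heine_borel} \<Rightarrow> ereal"
  assumes cl: "closed_proper_fun g" and sc: "strongly_convex_ereal \<mu> g" and mu: "\<mu> \<ge> 0"
    and c: "c > 0" and lb: "\<And>x. ereal (a0 + inner p x) \<le> g x"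
  shows "g (prox (\<lambda>v. ereal c * g v) u) < \<infinity>"
    and "\<And>w. g w < \<infinity> \<Longrightarrow>
      c * real_of_ereal (g (prox (\<lambda>v. ereal c * g v) u)) + (norm (prox (\<lambda>v. ereal c * g v) u - u))^2 / 2
        + (c * \<mu> + 1) / 2 * (norm (w - prox (\<lambda>v. ereal c * g v) u))^2
      \<le> c * real_of_ereal (g w) + (norm (w - u))^2 / 2"
proof -
  note pe = prox_exists[OF cl c lb, of u]
  show "g (prox (\<lambda>v. ereal c * g v) u) < \<infinity>" using pe by blast
  fix w assume w: "g w < \<infinity>"
  have notm: "\<And>x. g x \<noteq> -\<infinity>" using cl unfolding closed_proper_fun_def by auto
  show "c * real_of_ereal (g (prox (\<lambda>v. ereal c * g v) u)) + (norm (prox (\<lambda>v. ereal c * g v) u - u))^2 / 2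
        + (c * \<mu> + 1) / 2 * (norm (w - prox (\<lambda>v. ereal c * g v) u))^2
      \<le> c * real_of_ereal (g w) + (norm (w - u))^2 / 2"
  proof -
    have "c * real_of_ereal (g (prox (\<lambda>v. ereal c * g v) u)) + (\<lambda>v. (norm (v - u))^2 / 2) (prox (\<lambda>v. ereal c * g v) u)
        + (c * \<mu> + 1) / 2 * (norm (w - prox (\<lambda>v. ereal c * g v) u))^2
      \<le> c * real_of_ereal (g w) + (\<lambda>v. (norm (v - u))^2 / 2) w"
      apply (rule sc_min[OF sc mu notm c, of 1 "\<lambda>v. (norm (v - u))^2 / 2"])
      using pe q_sq w by auto
    thus ?thesis by simp
  qed
qed

lemma deriv_facts:
  fixes f :: "real \<Rightarrow> real"
  assumes cv: "convex_on UNIV f" and sm: "smooth_with L f"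
  shows deriv_has: "\<And>x. (f has_real_derivative deriv f x) (at x)"
    and tangent: "\<And>x y. f x + deriv f x * (y - x) \<le> f y"
    and deriv_mono: "\<And>x y. x \<le> y \<Longrightarrow> deriv f x \<le> deriv f y"
    and descent: "\<And>x y. f y \<le> f x + deriv f x * (y - x) + L / 2 * (y - x)^2"
    and deriv_cont: "L \<ge> 0 \<Longrightarrow> continuous_on UNIV (deriv f)"
proof -
  have dif: "\<And>x. f differentiable (at x)" and lip: "\<And>x y. \<bar>deriv f x - deriv f y\<bar> \<le> L * \<bar>x - y\<bar>"
    using sm unfolding smooth_with_def by auto
  show der: "\<And>x. (f has_real_derivative deriv f x) (at x)"
    using dif DERIV_deriv_iff_real_differentiable by blast
  show tan: "\<And>x y. f x + deriv f x * (y - x) \<le> f y"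
  proof -
    fix x y
    have "f y - f x \<ge> deriv f x * (y - x)"
      by (rule convex_on_imp_above_tangent[OF cv]) (use der in auto)
    thus "f x + deriv f x * (y - x) \<le> f y" by simp
  qed
  show "\<And>x y. x \<le> y \<Longrightarrow> deriv f x \<le> deriv f y"
  proof -
    fix x y :: real assume "x \<le> y"
    have "f x + deriv f x * (y - x) \<le> f y" "f y + deriv f y * (x - y) \<le> f x" using tan by auto
    hence "(deriv f y - deriv f x) * (y - x) \<ge> 0" by (simp add: algebra_simps)
    thus "deriv f x \<le> deriv f y" using \<open>x \<le> y\<close>
      by (cases "x = y") (auto simp: zero_le_mult_iff)
  qed
  show "\<And>x y. f y \<le> f x + deriv f x * (y - x) + L / 2 * (y - x)^2"
  proof -
    fix x y :: real
    define h where "h = y - x"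
    define \<phi> where "\<phi> t = f (x + t * h) - t * deriv f x * h - L / 2 * t^2 * h^2" for t
    have "\<exists>y. (\<phi> has_real_derivative y) (at t) \<and> y \<le> 0" if t: "0 \<le> t" "t \<le> 1" for t
    proof -
      have d1: "((\<lambda>t. f (x + t * h)) has_real_derivative deriv f (x + t * h) * h) (at t)"
        by (rule DERIV_chain2[OF der]) (auto intro!: derivative_eq_intros)
      have d2: "((\<lambda>t. t * deriv f x * h) has_real_derivative deriv f x * h) (at t)"
        by (auto intro!: derivative_eq_intros)
      have d3: "((\<lambda>t. L / 2 * t^2 * h^2) has_real_derivative L * t * h^2) (at t)"
        by (auto intro!: derivative_eq_intros)
      have "(\<phi> has_real_derivative deriv f (x + t * h) * h - deriv f x * h - L * t * h^2) (at t)"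
        unfolding \<phi>_def by (intro DERIV_diff d1 d2 d3)
      moreover have "deriv f (x + t * h) * h - deriv f x * h - L * t * h^2 \<le> 0"
      proof -
        have "(deriv f (x + t * h) - deriv f x) * h \<le> \<bar>deriv f (x + t * h) - deriv f x\<bar> * \<bar>h\<bar>"
          by (metis abs_ge_self abs_mult)
        also have "\<dots> \<le> L * \<bar>(x + t * h) - x\<bar> * \<bar>h\<bar>" using lip[of "x + t * h" x] by (intro mult_right_mono) auto
        also have "\<dots> = L * t * h^2" using t by (simp add: abs_mult power2_eq_square)
        finally show ?thesis by (simp add: algebra_simps)
      qed
      ultimately show "\<exists>y. (\<phi> has_real_derivative y) (at t) \<and> y \<le> 0" by blast
    qed
    hence "\<phi> 1 \<le> \<phi> 0" using DERIV_nonpos_imp_nonincreasing[of 0 1 \<phi>] by simp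
    thus "f y \<le> f x + deriv f x * (y - x) + L / 2 * (y - x)^2" unfolding \<phi>_def h_def by simp
  qed
  show "L \<ge> 0 \<Longrightarrow> continuous_on UNIV (deriv f)"
    by (rule lipschitz_on_continuous_on[of L]) (use lip in \<open>auto simp: lipschitz_on_def dist_real_def\<close>)
qed

lemma conj_prox:
  fixes f :: "real \<Rightarrow> real"
  assumes cv: "convex_on UNIV f" and sm: "smooth_with (1 / \<gamma>) f" and gam: "\<gamma> > 0" and tau: "\<tau> > 0"
  shows "\<exists>z. prox (\<lambda>v. ereal \<tau> * conj_fun f v) u = deriv f z \<and> u = deriv f z + \<tau> * z
     \<and> conj_fun f (deriv f z) = ereal (deriv f z * z - f z)
     \<and> (\<forall>w. ereal (w * z - f z + \<gamma> / 2 * (w - deriv f z)^2) \<le> conj_fun f w)"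
proof -
  note df = deriv_facts[OF cv sm]
  define \<phi> where "\<phi> z = deriv f z + \<tau> * z" for z
  define d0 where "d0 = deriv f 0"
  define a where "a = min 0 ((u - d0) / \<tau>)"
  define b where "b = max 0 ((u - d0) / \<tau>)"
  have "\<phi> a \<le> u"
  proof -
    have "deriv f a \<le> d0" unfolding d0_def by (rule df(3)) (simp add: a_def)
    moreover have "\<tau> * a \<le> \<tau> * ((u - d0) / \<tau>)" using tau by (intro mult_left_mono) (auto simp: a_def)
    ultimately show ?thesis unfolding \<phi>_def using tau by simp
  qed
  moreover have "u \<le> \<phi> b"
  proof -
    have "d0 \<le> deriv f b" unfolding d0_def by (rule df(3)) (simp add: b_def)
    moreover have "\<tau> * ((u - d0) / \<tau>) \<le> \<tau> * b" using tau by (intro mult_left_mono) (auto simp: b_def)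
    ultimately show ?thesis unfolding \<phi>_def using tau by simp
  qed
  moreover have "a \<le> b" by (simp add: a_def b_def)
  moreover have "continuous_on {a..b} \<phi>"
  proof -
    have "continuous_on UNIV (deriv f)" using df(5) gam by simp
    hence "continuous_on UNIV \<phi>" unfolding \<phi>_def by (intro continuous_intros)
    thus ?thesis by (rule continuous_on_subset) simp
  qed
  ultimately obtain z where "\<phi> z = u" using IVT'[of \<phi> a u b] by blast
  hence u: "u = deriv f z + \<tau> * z" by (simp add: \<phi>_def)
  define v0 where "v0 = deriv f z"
  have cv0: "conj_fun f v0 = ereal (v0 * z - f z)"
    unfolding conj_fun_def
  proof (rule antisym)
    show "(SUP x. ereal (v0 * x - f x)) \<le> ereal (v0 * z - f z)"
    proof (rule SUP_least)
      fix x
      have "f z + v0 * (x - z) \<le> f x" using df(2) unfolding v0_def by blast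
      thus "ereal (v0 * x - f x) \<le> ereal (v0 * z - f z)" by (simp add: algebra_simps)
    qed
    show "ereal (v0 * z - f z) \<le> (SUP x. ereal (v0 * x - f x))" by (rule SUP_upper) simp
  qed
  have clb: "ereal (w * z - f z + \<gamma> / 2 * (w - v0)^2) \<le> conj_fun f w" for w
  proof -
    define x where "x = z + \<gamma> * (w - v0)"
    have "f x \<le> f z + v0 * (x - z) + (1 / \<gamma>) / 2 * (x - z)^2" using df(4) unfolding v0_def by blast
    moreover have "(1 / \<gamma>) / 2 * (x - z)^2 = \<gamma> / 2 * (w - v0)^2"
      unfolding x_def using gam by (simp add: power2_eq_square field_simps)
    moreover have "w * x - v0 * (x - z) = w * z + \<gamma> * (w - v0)^2"
      unfolding x_def by (simp add: power2_eq_square algebra_simps)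
    ultimately have "w * z - f z + \<gamma> / 2 * (w - v0)^2 \<le> w * x - f x" by linarith
    also have "ereal (w * x - f x) \<le> conj_fun f w" unfolding conj_fun_def by (rule SUP_upper) simp
    finally show ?thesis by simp
  qed
  define P where "P v = (\<forall>w. ereal \<tau> * conj_fun f v + ereal (norm (v - u)^2 / 2) \<le> ereal \<tau> * conj_fun f w + ereal (norm (w - u)^2 / 2))" for v
  have strong: "\<tau> * (v0 * z - f z) + (v0 - u)^2 / 2 + (w - v0)^2 / 2 \<le> \<tau> * Cw + (w - u)^2 / 2"
    if "conj_fun f w = ereal Cw" for w Cw
  proof -
    have "w * z - f z + \<gamma> / 2 * (w - v0)^2 \<le> Cw" using clb[of w] that by simp
    hence "w * z - f z \<le> Cw" using gam by (smt (verit) zero_le_power2 mult_nonneg_nonneg divide_nonneg_pos)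
    hence "\<tau> * (w * z - f z) \<le> \<tau> * Cw" using tau by (intro mult_left_mono) auto
    moreover have "u = v0 + \<tau> * z" using u v0_def by simp
    hence "(w - u)^2 / 2 = (w - v0)^2 / 2 - \<tau> * z * (w - v0) + (v0 - u)^2 / 2"
      by (simp add: power2_eq_square field_simps)
    ultimately show ?thesis by (simp add: algebra_simps)
  qed
  have Pv0: "P v0" unfolding P_def
  proof
    fix w
    show "ereal \<tau> * conj_fun f v0 + ereal (norm (v0 - u)^2 / 2) \<le> ereal \<tau> * conj_fun f w + ereal (norm (w - u)^2 / 2)"
    proof (cases "conj_fun f w")
      case (real Cw)
      have "\<tau> * (v0 * z - f z) + (v0 - u)^2 / 2 \<le> \<tau> * Cw + (w - u)^2 / 2"
        using strong[OF real] by (smt (verit) zero_le_power2 divide_nonneg_pos)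
      thus ?thesis using real cv0 by simp
    next
      case PInf thus ?thesis using tau cv0 by simp
    next
      case MInf thus ?thesis using clb[of w] by simp
    qed
  qed
  have uniq: "v = v0" if "P v" for v
  proof -
    have le: "ereal \<tau> * conj_fun f v + ereal (norm (v - u)^2 / 2) \<le> ereal \<tau> * conj_fun f v0 + ereal (norm (v0 - u)^2 / 2)"
      using that unfolding P_def by blast
    obtain Cv where Cv: "conj_fun f v = ereal Cv"
    proof (cases "conj_fun f v")
      case PInf thus ?thesis using le cv0 tau by simp
    next
      case MInf thus ?thesis using clb[of v] by simp
    qed
    have "\<tau> * Cv + (v - u)^2 / 2 \<le> \<tau> * (v0 * z - f z) + (v0 - u)^2 / 2" using le Cv cv0 by simp
    with strong[OF Cv] have "(v - v0)^2 \<le> 0" by linarith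
    hence "(v - v0)^2 = 0" by (simp add: antisym)
    thus ?thesis by simp
  qed
  have pe: "prox (\<lambda>v. ereal \<tau> * conj_fun f v) u = (SOME v. P v)" unfolding prox_def P_def by simp
  have "P (SOME v. P v)" using Pv0 by (rule someI)
  hence "prox (\<lambda>v. ereal \<tau> * conj_fun f v) u = v0" unfolding pe by (rule uniq)
  thus ?thesis using u cv0 clb unfolding v0_def by blast
qed

lemma lists_card: "card {xs::('n::finite) list. length xs = T} = CARD('n) ^ T"
  using card_lists_length_eq[of "UNIV :: 'n set" T] by simp

lemma expect_mono:
  assumes "\<And>I. h I \<le> h' I"
  shows "expect_idx T h \<le> expect_idx T (h' :: (nat \<Rightarrow> 'n::finite) \<Rightarrow> real)"
  unfolding expect_idx_def
  by (intro divide_right_mono sum_mono assms) simp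

lemma expect_const: "expect_idx T (\<lambda>I::nat \<Rightarrow> 'n::finite. c) = c"
  unfolding expect_idx_def using lists_card[where 'n='n, of T] by simp

lemma expect_scale: "expect_idx T (\<lambda>I::nat \<Rightarrow> 'n::finite. c * h I) = c * expect_idx T h"
  unfolding expect_idx_def by (simp add: sum_distrib_left)

lemma expect_Suc:
  fixes h :: "(nat \<Rightarrow> 'n::finite) \<Rightarrow> real"
  assumes dep: "\<And>I I'. (\<And>k. k \<le> T \<Longrightarrow> I k = I' k) \<Longrightarrow> h I = h I'"
  shows "expect_idx (Suc T) h = expect_idx T (\<lambda>I. (\<Sum>i\<in>UNIV. h (I(T := i))) / real CARD('n))"
proof -
  have img: "{xs::'n list. length xs = Suc T} = (\<lambda>(ys, i). ys @ [i]) ` ({ys. length ys = T} \<times> UNIV)"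
  proof (intro set_eqI iffI)
    fix xs :: "'n list" assume "xs \<in> {xs. length xs = Suc T}"
    hence "xs = butlast xs @ [last xs]" "length (butlast xs) = T"
      by (auto intro: append_butlast_last_id[symmetric])
    thus "xs \<in> (\<lambda>(ys, i). ys @ [i]) ` ({ys. length ys = T} \<times> UNIV)" by force
  qed auto
  have inj: "inj_on (\<lambda>(ys, i). ys @ [i]) ({ys::'n list. length ys = T} \<times> UNIV)"
    by (auto simp: inj_on_def)
  have cong: "h (\<lambda>k. (ys @ [i]) ! k) = h ((\<lambda>k. ys ! k)(T := i))" if "length ys = T" for ys i
    by (rule dep) (use that in \<open>auto simp: nth_append\<close>)
  have "(\<Sum>xs\<in>{xs::'n list. length xs = Suc T}. h (\<lambda>k. xs ! k))
      = (\<Sum>ys\<in>{ys::'n list. length ys = T}. \<Sum>i\<in>UNIV. h ((\<lambda>k. ys ! k)(T := i)))"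
    unfolding img
    apply (subst sum.reindex[OF inj])
    apply (subst sum.cartesian_product)
    apply (rule sum.cong[OF refl])
    using cong by (auto simp: o_def)
  thus ?thesis unfolding expect_idx_def
    by (simp add: sum_divide_distrib[symmetric] field_simps)
qed

lemma inner_Amul: "inner (y::real^'n) ((A::real^'d^'n) *v x) = (\<Sum>j\<in>UNIV. y $ j * inner (A $ j) x)"
  by (simp add: inner_vec_def matrix_vector_mult_def sum_distrib_left)

lemma inner_ATmul: "inner (transpose (A::real^'d^'n) *v (y::real^'n)) x = (\<Sum>j\<in>UNIV. y $ j * inner (A $ j) x)"
  by (simp add: inner_vec_def matrix_vector_mult_def transpose_def sum_distrib_left sum_distrib_right
      mult_ac sum.swap[of _ "UNIV::'d set"])

locale sdapd_loc =
  fixes A :: "real^'d^'n::finite" and f :: "'n \<Rightarrow> real \<Rightarrow> real" and g :: "real^'d \<Rightarrow> ereal"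
    and \<gamma> \<mu> \<eta> \<tau> \<xi> R :: real and \<beta> :: "nat \<Rightarrow> real"
    and x0 xs :: "real^'d" and y0 ys :: "real^'n"
  assumes gam: "\<gamma> > 0" and mu: "\<mu> > 0" and eta: "\<eta> > 0" and tau: "\<tau> > 0" and xi1: "\<xi> \<ge> 1"
    and rows: "\<And>i. norm (A $ i) \<le> R"
    and etR: "\<eta> * \<tau> * R^2 \<le> 1"
    and xim: "\<xi> - 1 \<le> \<mu> * \<eta>"
    and xic: "\<xi> * (1 + \<tau> * \<gamma> * (real CARD('n) - 1) / real CARD('n)) \<le> 1 + \<tau> * \<gamma>"
    and beta: "\<beta> = (\<lambda>t. \<eta> * \<xi> ^ t)"
    and cvx: "\<And>i. convex_on UNIV (f i)"
    and smo: "\<And>i. smooth_with (1 / \<gamma>) (f i)"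
    and clo: "closed_proper_fun g"
    and scg: "strongly_convex_ereal \<mu> g"
    and sad: "is_saddle A f g xs ys"
begin

definition "G x = real_of_ereal (g x)"
definition "X I t = fst (sdapd_state A f g \<eta> \<tau> \<beta> x0 y0 I t)"
definition "Yv I t = fst (snd (sdapd_state A f g \<eta> \<tau> \<beta> x0 y0 I t))"
definition "S I t = snd (snd (sdapd_state A f g \<eta> \<tau> \<beta> x0 y0 I t))"
definition "XB I t = sdapd_xbar A f g \<eta> \<tau> \<beta> x0 y0 I t"
definition "Pv y = (1 / real CARD('n)) *\<^sub>R (transpose A *v y)"
definition "YP I t i = prox (\<lambda>v. ereal \<tau> * conj_fun (f i) v) (Yv I t $ i + \<tau> * inner (A $ i) (XB I t))"
definition "Bp t = (\<Sum>k<t. \<beta> k)"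

lemma nn_pos: "real CARD('n) > 0" and nn_ge1: "real CARD('n) \<ge> 1"
  by (simp_all add: Suc_le_eq)

lemma state_eq: "sdapd_state A f g \<eta> \<tau> \<beta> x0 y0 I t = (X I t, Yv I t, S I t)"
  unfolding X_def Yv_def S_def by simp

lemma X0: "X I 0 = x0" and Y0: "Yv I 0 = y0" and S0: "S I 0 = 0"
  unfolding X_def Yv_def S_def by simp_all

lemma XB_eq: "XB I t = prox (\<lambda>v. ereal \<eta> * g v) (X I t - (\<eta> / real CARD('n)) *\<^sub>R (transpose A *v Yv I t))"
  unfolding XB_def sdapd_xbar_def state_eq by (simp del: transpose_matrix_vector)

lemma Y_Suc: "Yv I (Suc t) = (\<chi> j. if j = I t then YP I t (I t) else Yv I t $ j)"
  unfolding Yv_def[of I "Suc t"] YP_def XB_eq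
  by (simp add: state_eq Let_def XB_eq del: transpose_matrix_vector)

lemma S_Suc: "S I (Suc t) = S I t + (\<beta> t / real CARD('n)) *\<^sub>R (transpose A *v (Yv I t + real CARD('n) *\<^sub>R (Yv I (Suc t) - Yv I t)))"
  unfolding S_def[of I "Suc t"] Y_Suc YP_def XB_eq
  by (simp add: state_eq Let_def XB_eq del: transpose_matrix_vector)

lemma X_Suc: "X I (Suc t) = prox (\<lambda>v. ereal (Bsum \<beta> t) * g v) (x0 - S I (Suc t))"
  unfolding X_def[of I "Suc t"] S_Suc Y_Suc YP_def XB_eq
  by (simp add: state_eq Let_def XB_eq del: transpose_matrix_vector)

lemma state_dep: "(\<And>k. k < t \<Longrightarrow> I k = I' k) \<Longrightarrow>
   sdapd_state A f g \<eta> \<tau> \<beta> x0 y0 I t = sdapd_state A f g \<eta> \<tau> \<beta> x0 y0 I' t"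
  by (induction t) (auto simp: Let_def split: prod.splits)

end

lemma sum_upd: "(\<Sum>j\<in>(UNIV::'n::finite set). (if j = i then a else b j)) = (\<Sum>j\<in>UNIV. b j) + a - (b i :: real)"
proof -
  have "(\<Sum>j\<in>(UNIV::'n set). (if j = i then a else b j)) = (\<Sum>j\<in>UNIV. b j + (if j = i then a - b i else 0))"
    by (rule sum.cong) (auto simp: algebra_simps)
  also have "\<dots> = (\<Sum>j\<in>UNIV. b j) + (a - b i)" by (simp add: sum.distrib)
  finally show ?thesis by simp
qed

lemma conj_gt: "conj_fun h s \<noteq> -\<infinity>"
proof -
  have "ereal (s * 0 - h 0) \<le> conj_fun h s" unfolding conj_fun_def by (rule SUP_upper) simp
  thus ?thesis by auto
qed

lemma Ftil_real:
  fixes A :: "real^'d^'n::finite"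
  assumes "g x = ereal Gx" and "\<And>j. conj_fun (f j) (y $ j) = ereal (C j)"
  shows "Ftil A f g x y = ereal (inner y (A *v x) / real CARD('n) + Gx - (\<Sum>j\<in>UNIV. C j) / real CARD('n))"
  unfolding Ftil_def assms by simp

context sdapd_loc
begin

lemma inner_Pv: "inner (Pv y) x = (\<Sum>j\<in>UNIV. y $ j * inner (A $ j) x) / real CARD('n)"
  unfolding Pv_def by (simp add: inner_ATmul del: transpose_matrix_vector)

lemma notm: "g x \<noteq> -\<infinity>" using clo unfolding closed_proper_fun_def by auto

lemma g_eq: "g x < \<infinity> \<Longrightarrow> g x = ereal (G x)"
  unfolding G_def using notm[of x] by (cases "g x") auto

lemma gxs: "g xs < \<infinity>" using sad unfolding is_saddle_def by auto

definition "Cs i = real_of_ereal (conj_fun (f i) (ys $ i))"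

lemma Cs_eq: "conj_fun (f i) (ys $ i) = ereal (Cs i)"
  using sad conj_gt[of "f i" "ys $ i"] unfolding is_saddle_def Cs_def by (cases "conj_fun (f i) (ys $ i)") auto

lemma primal_opt: "g x < \<infinity> \<Longrightarrow> G xs + inner (Pv ys) xs \<le> G x + inner (Pv ys) x"
proof -
  assume gx: "g x < \<infinity>"
  have "Ftil A f g xs ys \<le> Ftil A f g x ys" using sad unfolding is_saddle_def by blast
  hence "inner ys (A *v xs) / real CARD('n) + G xs - (\<Sum>j\<in>UNIV. Cs j) / real CARD('n)
      \<le> inner ys (A *v x) / real CARD('n) + G x - (\<Sum>j\<in>UNIV. Cs j) / real CARD('n)"
    by (simp add: Ftil_real[where g=g and x=xs and Gx="G xs" and f=f and y=ys and C=Cs, OF g_eq[OF gxs] Cs_eq] Ftil_real[where g=g and x=x and Gx="G x" and f=f and y=ys and C=Cs, OF g_eq[OF gx] Cs_eq])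
  thus ?thesis by (simp add: inner_Pv inner_Amul)
qed

lemma g_lb: "ereal ((G xs + inner (Pv ys) xs) + inner (- Pv ys) x) \<le> g x"
proof (cases "g x < \<infinity>")
  case True
  thus ?thesis using primal_opt[OF True] g_eq[OF True] by simp
qed simp

lemma F4: "g x < \<infinity> \<Longrightarrow> \<mu> / 2 * (norm (x - xs))^2 \<le> G x - G xs + inner (Pv ys) (x - xs)"
proof -
  assume gx: "g x < \<infinity>"
  have "1 * real_of_ereal (g xs) + (\<lambda>x. inner (Pv ys) x) xs + (1 * \<mu> + 0) / 2 * (norm (x - xs))^2
      \<le> 1 * real_of_ereal (g x) + (\<lambda>x. inner (Pv ys) x) x"
  proof (rule sc_min[OF scg _ notm, of 1 0])
    show "\<And>w. ereal 1 * g xs + ereal (inner (Pv ys) xs) \<le> ereal 1 * g w + ereal (inner (Pv ys) w)"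
    proof -
      fix w show "ereal 1 * g xs + ereal (inner (Pv ys) xs) \<le> ereal 1 * g w + ereal (inner (Pv ys) w)"
      proof (cases "g w < \<infinity>")
        case True thus ?thesis using primal_opt[OF True] g_eq[OF True] g_eq[OF gxs] by simp
      next
        case False thus ?thesis by simp
      qed
    qed
  qed (use mu gxs gx q_lin in auto)
  thus ?thesis unfolding G_def by (simp add: inner_diff_right)
qed

lemma dual_opt:
  assumes "conj_fun (f i) v = ereal Cv"
  shows "inner (A $ i) xs * (v - ys $ i) \<le> Cv - Cs i"
proof -
  define y where "y = (\<chi> j. if j = i then v else ys $ j)"
  have Cy: "conj_fun (f j) (y $ j) = ereal (if j = i then Cv else Cs j)" for j
    unfolding y_def using assms Cs_eq by auto
  have "Ftil A f g xs y \<le> Ftil A f g xs ys" using sad unfolding is_saddle_def by blast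
  hence "inner y (A *v xs) / real CARD('n) + G xs - (\<Sum>j\<in>UNIV. (if j = i then Cv else Cs j)) / real CARD('n)
      \<le> inner ys (A *v xs) / real CARD('n) + G xs - (\<Sum>j\<in>UNIV. Cs j) / real CARD('n)"
    by (simp add: Ftil_real[where g=g and x=xs and Gx="G xs" and f=f and y=y and C="\<lambda>j. if j = i then Cv else Cs j", OF g_eq[OF gxs] Cy] Ftil_real[where g=g and x=xs and Gx="G xs" and f=f and y=ys and C=Cs, OF g_eq[OF gxs] Cs_eq])
  hence "inner y (A *v xs) - (\<Sum>j\<in>UNIV. (if j = i then Cv else Cs j)) \<le> inner ys (A *v xs) - (\<Sum>j\<in>UNIV. Cs j)"
    using nn_pos by (simp add: divide_simps)
  moreover have "inner y (A *v xs) = inner ys (A *v xs) + (v - ys $ i) * inner (A $ i) xs"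
  proof -
    have "inner y (A *v xs) = (\<Sum>j\<in>UNIV. (if j = i then v * inner (A $ i) xs else ys $ j * inner (A $ j) xs))"
      unfolding inner_Amul y_def by (rule sum.cong) auto
    thus ?thesis unfolding inner_Amul sum_upd by (simp add: algebra_simps)
  qed
  ultimately show ?thesis unfolding sum_upd by (simp add: algebra_simps)
qed

end

lemma norm_shift: "(norm (w - (x0 - s)))^2 / 2 = (norm (w - x0))^2 / 2 + inner s w - inner s x0 + (norm (s::'a::real_inner))^2 / 2"
proof -
  have "w - (x0 - s) = (w - x0) + s" by simp
  thus ?thesis unfolding power2_norm_eq_inner
    by (simp add: inner_add_left inner_add_right inner_diff_left inner_diff_right inner_commute field_simps)
qed

context sdapd_loc
begin

lemma proxg:
  assumes c: "c > 0"
  shows "g (prox (\<lambda>v. ereal c * g v) u) < \<infinity>"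
    and "\<And>w. g w < \<infinity> \<Longrightarrow>
      c * G (prox (\<lambda>v. ereal c * g v) u) + (norm (prox (\<lambda>v. ereal c * g v) u - u))^2 / 2
        + (c * \<mu> + 1) / 2 * (norm (w - prox (\<lambda>v. ereal c * g v) u))^2
      \<le> c * G w + (norm (w - u))^2 / 2"
proof -
  note pg = prox_g[OF clo scg _ c g_lb, where u=u]
  show "g (prox (\<lambda>v. ereal c * g v) u) < \<infinity>" using pg(1) mu by simp
  fix w assume "g w < \<infinity>"
  thus "c * G (prox (\<lambda>v. ereal c * g v) u) + (norm (prox (\<lambda>v. ereal c * g v) u - u))^2 / 2
        + (c * \<mu> + 1) / 2 * (norm (w - prox (\<lambda>v. ereal c * g v) u))^2
      \<le> c * G w + (norm (w - u))^2 / 2" using pg(2) mu unfolding G_def by simp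
qed

lemma beta_pos: "\<beta> t > 0" using eta xi1 unfolding beta by simp

lemma Bsum_Bp: "Bsum \<beta> t = Bp (Suc t)"
  unfolding Bsum_def Bp_def using lessThan_Suc_atMost by simp

lemma Bp_Suc: "Bp (Suc t) = Bp t + \<beta> t" unfolding Bp_def by simp

lemma Bp_nonneg: "Bp t \<ge> 0"
  unfolding Bp_def using beta_pos by (simp add: sum_nonneg less_imp_le)

lemma Bp_pos: "t > 0 \<Longrightarrow> Bp t > 0"
  by (cases t) (auto simp: Bp_Suc intro: add_nonneg_pos Bp_nonneg beta_pos)

lemma Bp_xi: "\<xi> ^ t \<le> 1 + \<mu> * Bp t"
proof (induction t)
  case (Suc t)
  have "\<xi> ^ Suc t = \<xi> ^ t + (\<xi> - 1) * \<xi> ^ t" by (simp add: algebra_simps)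
  also have "\<dots> \<le> \<xi> ^ t + (\<mu> * \<eta>) * \<xi> ^ t" using xim xi1 by (intro add_left_mono mult_right_mono) auto
  also have "\<dots> \<le> 1 + \<mu> * Bp t + \<mu> * \<beta> t" using Suc by (simp add: beta)
  finally show ?case by (simp add: Bp_Suc algebra_simps)
qed (simp add: Bp_def)

lemma XB_dom: "g (XB I t) < \<infinity>"
  unfolding XB_eq using proxg(1)[OF eta] by blast

lemma XB_prox: "g w < \<infinity> \<Longrightarrow>
   \<eta> * G (XB I t) + (norm (XB I t - (X I t - \<eta> *\<^sub>R Pv (Yv I t))))^2 / 2
     + (\<eta> * \<mu> + 1) / 2 * (norm (w - XB I t))^2
   \<le> \<eta> * G w + (norm (w - (X I t - \<eta> *\<^sub>R Pv (Yv I t))))^2 / 2"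
proof -
  have e: "X I t - \<eta> *\<^sub>R Pv (Yv I t) = X I t - (\<eta> / real CARD('n)) *\<^sub>R (transpose A *v Yv I t)"
    unfolding Pv_def by simp
  assume "g w < \<infinity>"
  thus ?thesis unfolding e XB_eq by (rule proxg(2)[OF eta])
qed

definition "psi I t w = Bp t * G w + inner (S I t) w + (norm (w - x0))^2 / 2"

lemma X_dom: "t > 0 \<Longrightarrow> g (X I t) < \<infinity>"
proof -
  assume "t > 0"
  then obtain t' where t: "t = Suc t'" by (cases t) auto
  show ?thesis unfolding t X_Suc using proxg(1)[OF Bp_pos] by (simp add: Bsum_Bp)
qed

lemma X_min: "g w < \<infinity> \<Longrightarrow> psi I t (X I t) + (1 + \<mu> * Bp t) / 2 * (norm (w - X I t))^2 \<le> psi I t w"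
proof (cases t)
  case 0
  thus ?thesis by (simp add: psi_def X0 S0 Bp_def)
next
  case (Suc t')
  assume gw: "g w < \<infinity>"
  have c: "Bp t > 0" using Suc Bp_pos by simp
  have "Bp t * G (X I t) + (norm (X I t - (x0 - S I t)))^2 / 2 + (Bp t * \<mu> + 1) / 2 * (norm (w - X I t))^2
      \<le> Bp t * G w + (norm (w - (x0 - S I t)))^2 / 2"
    unfolding Suc X_Suc Bsum_Bp by (rule proxg(2)[OF Bp_pos gw]) simp
  thus ?thesis unfolding psi_def norm_shift by (simp add: algebra_simps)
qed

lemma Z_nonneg: "psi I t (X I t) \<le> psi I t xs"
proof -
  have "psi I t (X I t) + (1 + \<mu> * Bp t) / 2 * (norm (xs - X I t))^2 \<le> psi I t xs" by (rule X_min[OF gxs])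
  moreover have "(1 + \<mu> * Bp t) / 2 * (norm (xs - X I t))^2 \<ge> 0" using mu Bp_nonneg by simp
  ultimately show ?thesis by linarith
qed

lemma dual_step:
  fixes I t i
  defines "y \<equiv> Yv I t" and "xb \<equiv> XB I t" and "v \<equiv> YP I t i"
  shows "- ((ys $ i - y $ i)^2 / 2 - (v - y $ i)^2 / 2 - (1 + \<tau> * \<gamma>) / 2 * (v - ys $ i)^2)
         \<le> \<tau> * inner (A $ i) (xb - xs) * (v - ys $ i)"
proof -
  obtain z where vz: "v = deriv (f i) z" and u: "y $ i + \<tau> * inner (A $ i) xb = v + \<tau> * z"
    and cv: "conj_fun (f i) v = ereal (v * z - f i z)"
    and clb: "\<And>w. ereal (w * z - f i z + \<gamma> / 2 * (w - v)^2) \<le> conj_fun (f i) w"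
    using conj_prox[OF cvx smo gam tau, where u="y $ i + \<tau> * inner (A $ i) xb"]
    unfolding v_def YP_def y_def xb_def by metis
  have d: "inner (A $ i) xs * (v - ys $ i) \<le> (v * z - f i z) - Cs i" by (rule dual_opt[OF cv])
  have "ys $ i * z - f i z + \<gamma> / 2 * (ys $ i - v)^2 \<le> Cs i" using clb[of "ys $ i"] Cs_eq[of i] by simp
  with d have "inner (A $ i) xs * (v - ys $ i) \<le> z * (v - ys $ i) - \<gamma> / 2 * (v - ys $ i)^2"
    by (simp add: power2_commute algebra_simps)
  hence "\<tau> * (inner (A $ i) xs * (v - ys $ i)) \<le> \<tau> * (z * (v - ys $ i) - \<gamma> / 2 * (v - ys $ i)^2)"
    using tau by (intro mult_left_mono) auto
  moreover have tz: "\<tau> * z = y $ i + \<tau> * inner (A $ i) xb - v" using u by simp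
  have "\<tau> * (z * (v - ys $ i) - \<gamma> / 2 * (v - ys $ i)^2) = (\<tau> * z) * (v - ys $ i) - \<tau> * \<gamma> / 2 * (v - ys $ i)^2"
    by (simp add: algebra_simps)
  also have "\<dots> = (y $ i + \<tau> * inner (A $ i) xb - v) * (v - ys $ i) - \<tau> * \<gamma> / 2 * (v - ys $ i)^2"
    unfolding tz ..
  ultimately have "\<tau> * (inner (A $ i) xs * (v - ys $ i)) \<le> (y $ i + \<tau> * inner (A $ i) xb - v) * (v - ys $ i) - \<tau> * \<gamma> / 2 * (v - ys $ i)^2"
    by linarith
  moreover have "- ((y $ i - v) * (v - ys $ i)) = (v - y $ i)^2 / 2 + (v - ys $ i)^2 / 2 - (ys $ i - y $ i)^2 / 2"
    by (simp add: power2_eq_square field_simps)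
  moreover have "\<tau> * inner (A $ i) (xb - xs) * (v - ys $ i) = \<tau> * inner (A $ i) xb * (v - ys $ i) - \<tau> * (inner (A $ i) xs * (v - ys $ i))"
    by (simp add: inner_diff_right algebra_simps)
  moreover have "(y $ i + \<tau> * inner (A $ i) xb - v) * (v - ys $ i) = (y $ i - v) * (v - ys $ i) + \<tau> * inner (A $ i) xb * (v - ys $ i)"
    by (simp add: algebra_simps)
  moreover have "(1 + \<tau> * \<gamma>) / 2 * (v - ys $ i)^2 = (v - ys $ i)^2 / 2 + \<tau> * \<gamma> / 2 * (v - ys $ i)^2"
    by (simp add: field_simps)
  ultimately show ?thesis by linarith
qed

end

lemma step_arith:
  fixes Zs Zx Zxp Gxs Gxb Gxp Pxs Pxb Pxp Qxs Qxb axs axb axp Nxpx Nxbx Nxpxb Nd \<delta> b e \<mu> \<eta> \<tau> :: real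
  assumes H1: "Zx + e/2 * Nxpx \<le> Zxp"
    and H2: "e * (\<eta> * Gxb + Nxbx/2 + \<eta> * Pxb + (\<eta> * \<mu> + 1)/2 * Nxpxb) \<le> e * (\<eta> * Gxp + Nxpx/2 + \<eta> * Pxp)"
    and H4: "b * (\<mu>/2 * Nd) \<le> b * (Gxb - Gxs + (Qxb - Qxs))"
    and H5: "- (b * (\<delta> * (axp - axb))) \<le> e/2 * Nxpxb + b/(2*\<tau>) * \<delta>^2"
    and b: "b = \<eta> * e" and pos: "e \<ge> 0" "\<eta> \<ge> 0" "\<mu> \<ge> 0" "Nxbx \<ge> 0" "Nxpxb \<ge> 0"
  shows "(Zs + b * Gxs + b * (Pxs + \<delta> * axs)) - (Zxp + b * Gxp + b * (Pxp + \<delta> * axp))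
     \<le> (Zs - Zx) - b * \<mu> / 2 * Nd - b * ((Pxb - Pxs) - (Qxb - Qxs)) - b * (\<delta> * (axb - axs)) + b / (2*\<tau>) * \<delta>^2"
proof -
  have h6: "e * (\<eta> * \<mu>) / 2 * Nxpxb \<ge> 0" "e * Nxbx / 2 \<ge> 0" using pos by simp_all
  show ?thesis using H1 H2 H4 H5 h6 unfolding b by (simp add: algebra_simps add_divide_distrib diff_divide_distrib)
qed

lemma young_aux:
  fixes e \<eta> \<tau> R q nw \<delta> :: real
  assumes e: "e \<ge> 0" and eta: "\<eta> > 0" and tau: "\<tau> > 0" and etR: "\<eta> * \<tau> * R^2 \<le> 1"
    and q: "\<bar>q\<bar> \<le> R * nw" and nw: "nw \<ge> 0"
  shows "- ((\<eta> * e) * (\<delta> * q)) \<le> e/2 * nw^2 + (\<eta> * e)/(2*\<tau>) * \<delta>^2"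
proof -
  have "- ((\<eta> * e) * (\<delta> * q)) \<le> \<bar>(\<eta> * e) * (\<delta> * q)\<bar>" by (rule abs_ge_minus_self)
  also have "\<dots> = (\<eta> * e) * (\<bar>\<delta>\<bar> * \<bar>q\<bar>)" using e eta by (simp add: abs_mult)
  also have "\<dots> \<le> (\<eta> * e) * (\<bar>\<delta>\<bar> * (R * nw))"
    using e eta q by (intro mult_left_mono) auto
  also have "\<dots> = e * ((\<eta> * R * \<bar>\<delta>\<bar>) * nw)" by (simp add: algebra_simps)
  also have "\<dots> \<le> e * (((\<eta> * R * \<bar>\<delta>\<bar>)^2 + nw^2) / 2)"
  proof -
    have "0 \<le> (\<eta> * R * \<bar>\<delta>\<bar> - nw)^2" by simp
    hence "(\<eta> * R * \<bar>\<delta>\<bar>) * nw \<le> ((\<eta> * R * \<bar>\<delta>\<bar>)^2 + nw^2) / 2"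
      by (simp add: power2_eq_square algebra_simps)
    thus ?thesis using e by (intro mult_left_mono) auto
  qed
  also have "\<dots> = e/2 * nw^2 + (e * \<eta> * \<delta>^2 / 2) * (\<eta> * R^2)"
    by (simp add: power2_eq_square algebra_simps)
  also have "\<dots> \<le> e/2 * nw^2 + (e * \<eta> * \<delta>^2 / 2) * (1 / \<tau>)"
  proof -
    have "\<eta> * R^2 \<le> 1 / \<tau>" using etR tau by (simp add: field_simps)
    thus ?thesis using e eta by (intro add_left_mono mult_left_mono) auto
  qed
  also have "\<dots> = e/2 * nw^2 + (\<eta> * e)/(2*\<tau>) * \<delta>^2" by (simp add: field_simps)
  finally show ?thesis .
qed

context sdapd_loc
begin

lemma ybar_comp: "(Yv I t + real CARD('n) *\<^sub>R (Yv I (Suc t) - Yv I t)) $ j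
   = Yv I t $ j + real CARD('n) * (if j = I t then YP I t (I t) - Yv I t $ I t else 0)"
  unfolding Y_Suc by simp

lemma psi_Suc: "psi I (Suc t) w = psi I t w + \<beta> t * G w
   + \<beta> t * (inner (Pv (Yv I t)) w + (YP I t (I t) - Yv I t $ I t) * inner (A $ I t) w)"
proof -
  let ?yb = "Yv I t + real CARD('n) *\<^sub>R (Yv I (Suc t) - Yv I t)"
  have "inner (transpose A *v ?yb) w = (\<Sum>j\<in>UNIV. ?yb $ j * inner (A $ j) w)"
    by (rule inner_ATmul)
  also have "\<dots> = (\<Sum>j\<in>UNIV. Yv I t $ j * inner (A $ j) w
      + (if j = I t then real CARD('n) * (YP I t (I t) - Yv I t $ I t) * inner (A $ I t) w else 0))"
    unfolding ybar_comp by (rule sum.cong) (auto simp: algebra_simps)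
  also have "\<dots> = (\<Sum>j\<in>UNIV. Yv I t $ j * inner (A $ j) w) + real CARD('n) * (YP I t (I t) - Yv I t $ I t) * inner (A $ I t) w"
    by (simp add: sum.distrib)
  finally have e: "inner (transpose A *v ?yb) w = (\<Sum>j\<in>UNIV. Yv I t $ j * inner (A $ j) w) + real CARD('n) * (YP I t (I t) - Yv I t $ I t) * inner (A $ I t) w" .
  show ?thesis
    unfolding psi_def S_Suc Bp_Suc inner_add_left inner_scaleR_left e inner_Pv
    using nn_pos by (simp add: field_simps del: transpose_matrix_vector)
qed

end

context sdapd_loc
begin

definition "Zf I t = psi I t xs - psi I t (X I t)"

lemma R_nonneg: "R \<ge> 0" using rows[of undefined] norm_ge_zero order_trans by blast

lemma step_path:
  fixes I t
  defines "i \<equiv> I t" and "y \<equiv> Yv I t" and "xb \<equiv> XB I t"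
  defines "\<delta> \<equiv> YP I t i - y $ i"
  shows "Zf I (Suc t) \<le> Zf I t - \<beta> t * \<mu> / 2 * (norm (xb - xs))^2
     - \<beta> t * ((inner (Pv y) xb - inner (Pv y) xs) - (inner (Pv ys) xb - inner (Pv ys) xs))
     - \<beta> t * (\<delta> * (inner (A $ i) xb - inner (A $ i) xs)) + \<beta> t / (2 * \<tau>) * \<delta>^2"
proof -
  define x where "x = X I t"
  define x' where "x' = X I (Suc t)"
  define e where "e = \<xi> ^ t"
  have b: "\<beta> t = \<eta> * e" unfolding beta e_def by simp
  have e0: "e \<ge> 0" unfolding e_def using xi1 by simp
  have gx': "g x' < \<infinity>" unfolding x'_def by (rule X_dom) simp
  have gxb: "g xb < \<infinity>" unfolding xb_def by (rule XB_dom)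
  have H1: "psi I t x + e/2 * (norm (x' - x))^2 \<le> psi I t x'"
  proof -
    have "psi I t x + (1 + \<mu> * Bp t) / 2 * (norm (x' - x))^2 \<le> psi I t x'"
      unfolding x_def by (rule X_min[OF gx'])
    moreover have "e/2 * (norm (x' - x))^2 \<le> (1 + \<mu> * Bp t) / 2 * (norm (x' - x))^2"
      using Bp_xi[of t] unfolding e_def by (intro mult_right_mono) auto
    ultimately show ?thesis by linarith
  qed
  have H2: "e * (\<eta> * G xb + (norm (xb - x))^2/2 + \<eta> * inner (Pv y) xb + (\<eta> * \<mu> + 1)/2 * (norm (x' - xb))^2)
      \<le> e * (\<eta> * G x' + (norm (x' - x))^2/2 + \<eta> * inner (Pv y) x')"
  proof -
    have "\<eta> * G xb + (norm (xb - (x - \<eta> *\<^sub>R Pv y)))^2 / 2 + (\<eta> * \<mu> + 1) / 2 * (norm (x' - xb))^2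
       \<le> \<eta> * G x' + (norm (x' - (x - \<eta> *\<^sub>R Pv y)))^2 / 2"
      unfolding x_def y_def xb_def by (rule XB_prox[OF gx'[unfolded xb_def]])
    hence "\<eta> * G xb + (norm (xb - x))^2/2 + \<eta> * inner (Pv y) xb + (\<eta> * \<mu> + 1)/2 * (norm (x' - xb))^2
      \<le> \<eta> * G x' + (norm (x' - x))^2/2 + \<eta> * inner (Pv y) x'"
      unfolding norm_shift by simp
    thus ?thesis using e0 by (rule mult_left_mono)
  qed
  have H4: "\<beta> t * (\<mu>/2 * (norm (xb - xs))^2) \<le> \<beta> t * (G xb - G xs + (inner (Pv ys) xb - inner (Pv ys) xs))"
    using F4[OF gxb] beta_pos[of t] by (intro mult_left_mono) (auto simp: inner_diff_right)
  have H5: "- (\<beta> t * (\<delta> * (inner (A $ i) x' - inner (A $ i) xb))) \<le> e/2 * (norm (x' - xb))^2 + \<beta> t/(2*\<tau>) * \<delta>^2"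
  proof -
    have "\<bar>inner (A $ i) x' - inner (A $ i) xb\<bar> \<le> R * norm (x' - xb)"
    proof -
      have "\<bar>inner (A $ i) (x' - xb)\<bar> \<le> norm (A $ i) * norm (x' - xb)" by (rule Cauchy_Schwarz_ineq2)
      also have "\<dots> \<le> R * norm (x' - xb)" using rows by (intro mult_right_mono) auto
      finally show ?thesis by (simp add: inner_diff_right)
    qed
    from young_aux[OF e0 eta tau etR this norm_ge_zero, of \<delta>] show ?thesis unfolding b .
  qed
  have "(psi I t xs + \<beta> t * G xs + \<beta> t * (inner (Pv y) xs + \<delta> * inner (A $ i) xs))
      - (psi I t x' + \<beta> t * G x' + \<beta> t * (inner (Pv y) x' + \<delta> * inner (A $ i) x'))
     \<le> (psi I t xs - psi I t x) - \<beta> t * \<mu> / 2 * (norm (xb - xs))^2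
      - \<beta> t * ((inner (Pv y) xb - inner (Pv y) xs) - (inner (Pv ys) xb - inner (Pv ys) xs))
      - \<beta> t * (\<delta> * (inner (A $ i) xb - inner (A $ i) xs)) + \<beta> t / (2*\<tau>) * \<delta>^2"
    by (rule step_arith[OF H1 H2 H4 H5 b e0]) (use eta mu in auto)
  thus ?thesis unfolding Zf_def psi_Suc x_def x'_def y_def \<delta>_def i_def by simp
qed

end

context sdapd_loc
begin

lemma dep:
  assumes "\<And>k. k < t \<Longrightarrow> I k = I' k"
  shows "X I t = X I' t" "Yv I t = Yv I' t" "S I t = S I' t" "XB I t = XB I' t"
    "YP I t j = YP I' t j" "Zf I t = Zf I' t" "psi I t w = psi I' t w"
proof -
  have st: "sdapd_state A f g \<eta> \<tau> \<beta> x0 y0 I t = sdapd_state A f g \<eta> \<tau> \<beta> x0 y0 I' t"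
    by (rule state_dep) (use assms in auto)
  show x: "X I t = X I' t" and y: "Yv I t = Yv I' t" and s: "S I t = S I' t"
    unfolding X_def Yv_def S_def st by simp_all
  show xb: "XB I t = XB I' t" unfolding XB_eq x y ..
  show "YP I t j = YP I' t j" unfolding YP_def xb y ..
  show p: "psi I t w = psi I' t w" unfolding psi_def s ..
  show "Zf I t = Zf I' t" unfolding Zf_def psi_def s x ..
qed

lemma dep_upd:
  "X (I(t := i)) t = X I t" "Yv (I(t := i)) t = Yv I t" "XB (I(t := i)) t = XB I t"
  "YP (I(t := i)) t j = YP I t j" "Zf (I(t := i)) t = Zf I t"
  by (rule dep[symmetric]; simp)+

definition "c1 = 1 + \<tau> * \<gamma> * (real CARD('n) - 1) / real CARD('n)"
definition "Yd I t = (norm (Yv I t - ys))^2"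
definition "V I t = Zf I t + \<beta> t * c1 / (2 * \<tau>) * Yd I t"

lemma norm_sq_vec: "(norm (v :: real^'n))^2 = (\<Sum>j\<in>UNIV. (v $ j)^2)"
  unfolding power2_norm_eq_inner inner_vec_def by (simp add: power2_eq_square)

lemma Yd_upd: "Yd (I(t := i)) (Suc t) = Yd I t - (Yv I t $ i - ys $ i)^2 + (YP I t i - ys $ i)^2"
proof -
  have "Yd (I(t := i)) (Suc t) = (\<Sum>j\<in>UNIV. (if j = i then (YP I t i - ys $ i)^2 else (Yv I t $ j - ys $ j)^2))"
    unfolding Yd_def norm_sq_vec Y_Suc dep_upd by (rule sum.cong) auto
  thus ?thesis unfolding sum_upd Yd_def norm_sq_vec by simp
qed

lemma c1_ge: "c1 \<ge> 1" unfolding c1_def using tau gam nn_ge1 by simp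

lemma Kp_le: "\<beta> (Suc t) * c1 \<le> \<beta> t * (1 + \<tau> * \<gamma>)"
proof -
  have "\<beta> (Suc t) * c1 = \<eta> * \<xi> ^ t * (\<xi> * c1)" unfolding beta by simp
  also have "\<dots> \<le> \<eta> * \<xi> ^ t * (1 + \<tau> * \<gamma>)"
    using xic eta xi1 unfolding c1_def by (intro mult_left_mono) auto
  finally show ?thesis unfolding beta by simp
qed

lemma K_eq: "\<beta> t / (2 * \<tau>) + (real CARD('n) - 1) * (\<beta> t * (1 + \<tau> * \<gamma>) / (2 * \<tau>))
    = real CARD('n) * (\<beta> t * c1 / (2 * \<tau>))"
  unfolding c1_def using nn_pos tau by (simp add: field_simps)

lemma avg_step:
  "(\<Sum>i\<in>UNIV. V (I(t := i)) (Suc t)) / real CARD('n) \<le> V I t - \<beta> t * \<mu> / 2 * (norm (XB I t - xs))^2"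
proof -
  define n where "n = real CARD('n)"
  define y where "y = Yv I t"
  define xb where "xb = XB I t"
  define b where "b = \<beta> t"
  define K' where "K' = \<beta> (Suc t) * c1 / (2 * \<tau>)"
  define K where "K = \<beta> t * c1 / (2 * \<tau>)"
  define ee where "ee j = inner (A $ j) xb - inner (A $ j) xs" for j
  define v where "v j = YP I t j" for j
  define Nd where "Nd = (norm (xb - xs))^2"
  define DPQ where "DPQ = (inner (Pv y) xb - inner (Pv y) xs) - (inner (Pv ys) xb - inner (Pv ys) xs)"
  have n0: "n > 0" "n \<ge> 1" unfolding n_def using nn_pos nn_ge1 by auto
  have b0: "b > 0" unfolding b_def by (rule beta_pos)
  have K'le: "K' \<le> b * (1 + \<tau> * \<gamma>) / (2 * \<tau>)" unfolding K'_def b_def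
    using Kp_le[of t] tau by (simp add: divide_right_mono)
  have K'0: "K' \<ge> 0" unfolding K'_def using beta_pos[of "Suc t"] c1_ge tau by simp
  have DPQ: "n * DPQ = (\<Sum>j\<in>UNIV. (y $ j - ys $ j) * ee j)"
    unfolding DPQ_def inner_Pv n_def ee_def using nn_pos
    by (simp add: field_simps sum_subtractf[symmetric] sum_divide_distrib[symmetric])
  have Yd: "Yd I t = (\<Sum>j\<in>UNIV. (y $ j - ys $ j)^2)" unfolding Yd_def norm_sq_vec y_def by simp
  define Q where "Q j = - b * ((v j - y $ j) * ee j) + b / (2 * \<tau>) * (v j - y $ j)^2 + K' * (v j - ys $ j)^2 - K' * (y $ j - ys $ j)^2" for j
  have per: "V (I(t := i)) (Suc t) \<le> Zf I t - b * \<mu> / 2 * Nd - b * DPQ + K' * Yd I t + Q i" for i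
  proof -
    have s: "Zf (I(t := i)) (Suc t) \<le> Zf I t - b * \<mu> / 2 * Nd - b * DPQ
        - b * ((v i - y $ i) * ee i) + b / (2 * \<tau>) * (v i - y $ i)^2"
      using step_path[where I="I(t := i)" and t=t] unfolding dep_upd
      by (simp add: b_def Nd_def DPQ_def ee_def v_def y_def xb_def)
    show ?thesis unfolding V_def Yd_upd K'_def[symmetric] Q_def using s
      by (simp add: v_def y_def algebra_simps)
  qed
  have perQ: "Q j - b * ((y $ j - ys $ j) * ee j) \<le> (b / (2 * \<tau>) - K') * (y $ j - ys $ j)^2" for j
  proof -
    have ds: "- ((ys $ j - y $ j)^2 / 2 - (v j - y $ j)^2 / 2 - (1 + \<tau> * \<gamma>) / 2 * (v j - ys $ j)^2)
         \<le> \<tau> * ee j * (v j - ys $ j)"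
      using dual_step[where I=I and t=t and i=j] unfolding ee_def v_def y_def xb_def by (simp add: inner_diff_right)
    have "b / \<tau> * (- ((ys $ j - y $ j)^2 / 2 - (v j - y $ j)^2 / 2 - (1 + \<tau> * \<gamma>) / 2 * (v j - ys $ j)^2))
        \<le> b / \<tau> * (\<tau> * ee j * (v j - ys $ j))"
      using b0 tau ds by (intro mult_left_mono) auto
    hence A1: "- (b * (ee j * (v j - ys $ j))) \<le> b / (2 * \<tau>) * (ys $ j - y $ j)^2 - b / (2 * \<tau>) * (v j - y $ j)^2
        - b * (1 + \<tau> * \<gamma>) / (2 * \<tau>) * (v j - ys $ j)^2"
      using tau by (simp add: field_simps)
    have A2: "K' * (v j - ys $ j)^2 \<le> b * (1 + \<tau> * \<gamma>) / (2 * \<tau>) * (v j - ys $ j)^2"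
      using K'le by (intro mult_right_mono) auto
    have A3: "b * ((v j - y $ j) * ee j) + b * ((y $ j - ys $ j) * ee j) = b * (ee j * (v j - ys $ j))"
      by (simp add: algebra_simps)
    have A4: "(ys $ j - y $ j)^2 = (y $ j - ys $ j)^2" by (simp add: power2_commute)
    show ?thesis unfolding Q_def using A1 A2 A3 A4 by (simp add: algebra_simps)
  qed
  have "(\<Sum>i\<in>UNIV. V (I(t := i)) (Suc t)) \<le> (\<Sum>i\<in>UNIV. (Zf I t - b * \<mu> / 2 * Nd - b * DPQ + K' * Yd I t) + Q i)"
    by (rule sum_mono) (rule per)
  also have "\<dots> = n * (Zf I t - b * \<mu> / 2 * Nd - b * DPQ + K' * Yd I t) + (\<Sum>i\<in>UNIV. Q i)"
    unfolding n_def by (simp add: sum.distrib)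
  also have "\<dots> = n * (Zf I t - b * \<mu> / 2 * Nd + K' * Yd I t) - b * (n * DPQ) + (\<Sum>i\<in>UNIV. Q i)"
    by (simp add: algebra_simps)
  also have "\<dots> = n * (Zf I t - b * \<mu> / 2 * Nd + K' * Yd I t) + (\<Sum>j\<in>UNIV. Q j - b * ((y $ j - ys $ j) * ee j))"
    unfolding DPQ by (simp add: sum_subtractf sum_distrib_left)
  also have "\<dots> \<le> n * (Zf I t - b * \<mu> / 2 * Nd + K' * Yd I t) + (\<Sum>j\<in>UNIV. (b / (2 * \<tau>) - K') * (y $ j - ys $ j)^2)"
    by (intro add_left_mono sum_mono perQ)
  also have "\<dots> = n * (Zf I t - b * \<mu> / 2 * Nd + K' * Yd I t) + (b / (2 * \<tau>) - K') * Yd I t"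
    unfolding Yd by (simp only: sum_distrib_left[symmetric])
  also have "\<dots> = n * (Zf I t - b * \<mu> / 2 * Nd) + (b / (2 * \<tau>) + (n - 1) * K') * Yd I t"
    by (simp add: algebra_simps)
  also have "\<dots> \<le> n * (Zf I t - b * \<mu> / 2 * Nd) + (b / (2 * \<tau>) + (n - 1) * (b * (1 + \<tau> * \<gamma>) / (2 * \<tau>))) * Yd I t"
  proof -
    have "(n - 1) * K' \<le> (n - 1) * (b * (1 + \<tau> * \<gamma>) / (2 * \<tau>))" using K'le n0 by (intro mult_left_mono) auto
    thus ?thesis by (intro add_left_mono mult_right_mono) (auto simp: Yd_def)
  qed
  also have "\<dots> = n * (Zf I t - b * \<mu> / 2 * Nd + K * Yd I t)"
    using K_eq[of t] unfolding K_def b_def n_def by (simp add: algebra_simps)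
  also have "\<dots> = n * (V I t - \<beta> t * \<mu> / 2 * (norm (XB I t - xs))^2)"
    unfolding V_def K_def b_def Nd_def xb_def by (simp add: algebra_simps)
  finally have fin: "(\<Sum>i\<in>UNIV. V (I(t := i)) (Suc t)) \<le> n * (V I t - \<beta> t * \<mu> / 2 * (norm (XB I t - xs))^2)" .
  show ?thesis using n0 fin unfolding n_def by (simp add: pos_divide_le_eq mult.commute)
qed

end

lemma jensen_sq:
  fixes v :: "nat \<Rightarrow> 'a::real_inner"
  assumes w: "\<And>t. w t \<ge> 0" and W: "(\<Sum>t<T. w t) > 0"
  shows "(norm ((1 / (\<Sum>t<T. w t)) *\<^sub>R (\<Sum>t<T. w t *\<^sub>R v t) - c))^2
     \<le> (1 / (\<Sum>t<T. w t)) * (\<Sum>t<T. w t * (norm (v t - c))^2)"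
proof -
  define W where "W = (\<Sum>t<T. w t)"
  have W0: "W > 0" using W unfolding W_def .
  have e: "(1 / W) *\<^sub>R (\<Sum>t<T. w t *\<^sub>R v t) - c = (1 / W) *\<^sub>R (\<Sum>t<T. w t *\<^sub>R (v t - c))"
  proof -
    have "(\<Sum>t<T. w t *\<^sub>R (v t - c)) = (\<Sum>t<T. w t *\<^sub>R v t) - W *\<^sub>R c"
      unfolding W_def by (simp add: scaleR_diff_right sum_subtractf scaleR_sum_left)
    thus ?thesis using W0 by (simp add: scaleR_diff_right)
  qed
  have n1: "norm (\<Sum>t<T. w t *\<^sub>R (v t - c)) \<le> (\<Sum>t<T. w t * norm (v t - c))"
    using norm_sum[of "\<lambda>t. w t *\<^sub>R (v t - c)" "{..<T}"] w by (simp add: abs_of_nonneg)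
  have cs: "(\<Sum>t<T. w t * norm (v t - c))^2 \<le> W * (\<Sum>t<T. w t * (norm (v t - c))^2)"
  proof -
    have "(\<Sum>t<T. sqrt (w t) * (sqrt (w t) * norm (v t - c)))^2
        \<le> (\<Sum>t<T. (sqrt (w t))^2) * (\<Sum>t<T. (sqrt (w t) * norm (v t - c))^2)"
      by (rule Cauchy_Schwarz_ineq_sum)
    moreover have "(\<Sum>t<T. sqrt (w t) * (sqrt (w t) * norm (v t - c))) = (\<Sum>t<T. w t * norm (v t - c))"
      using w by (intro sum.cong) (auto simp: mult.assoc[symmetric])
    moreover have "(\<Sum>t<T. (sqrt (w t))^2) = W" unfolding W_def using w by simp
    moreover have "(\<Sum>t<T. (sqrt (w t) * norm (v t - c))^2) = (\<Sum>t<T. w t * (norm (v t - c))^2)"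
      using w by (intro sum.cong) (auto simp: power_mult_distrib)
    ultimately show ?thesis by simp
  qed
  have "(norm ((1 / W) *\<^sub>R (\<Sum>t<T. w t *\<^sub>R v t) - c))^2 = (1 / W)^2 * (norm (\<Sum>t<T. w t *\<^sub>R (v t - c)))^2"
    unfolding e using W0 by (simp add: power_divide)
  also have "\<dots> \<le> (1 / W)^2 * (\<Sum>t<T. w t * norm (v t - c))^2"
    using n1 by (intro mult_left_mono power_mono) auto
  also have "\<dots> \<le> (1 / W)^2 * (W * (\<Sum>t<T. w t * (norm (v t - c))^2))"
    using cs by (intro mult_left_mono) auto
  also have "\<dots> = (1 / W) * (\<Sum>t<T. w t * (norm (v t - c))^2)"
    using W0 by (simp add: power2_eq_square field_simps)
  finally show ?thesis unfolding W_def .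
qed

context sdapd_loc
begin

definition "H I T = V I T + (\<Sum>k<T. \<beta> k * \<mu> / 2 * (norm (XB I k - xs))^2)"

lemma H_dep: "(\<And>k. k < T \<Longrightarrow> I k = I' k) \<Longrightarrow> H I T = H I' T"
proof -
  assume a: "\<And>k. k < T \<Longrightarrow> I k = I' k"
  have "XB I k = XB I' k" if "k < T" for k by (rule dep(4)) (use a that in auto)
  moreover have "Zf I T = Zf I' T" "Yv I T = Yv I' T" by (rule dep; use a in auto)+
  ultimately show ?thesis unfolding H_def V_def Yd_def by (auto intro!: sum.cong)
qed

lemma H_step: "(\<Sum>i\<in>UNIV. H (I(T := i)) (Suc T)) / real CARD('n) \<le> H I T"
proof -
  have xb: "XB (I(T := i)) k = XB I k" if "k < Suc T" for k i by (rule dep(4)) (use that in auto)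
  have "(\<Sum>i\<in>UNIV. H (I(T := i)) (Suc T)) = (\<Sum>i\<in>UNIV. V (I(T := i)) (Suc T))
      + real CARD('n) * (\<Sum>k<Suc T. \<beta> k * \<mu> / 2 * (norm (XB I k - xs))^2)"
    unfolding H_def by (simp add: sum.distrib xb)
  hence "(\<Sum>i\<in>UNIV. H (I(T := i)) (Suc T)) / real CARD('n) = (\<Sum>i\<in>UNIV. V (I(T := i)) (Suc T)) / real CARD('n)
      + (\<Sum>k<Suc T. \<beta> k * \<mu> / 2 * (norm (XB I k - xs))^2)"
    using nn_pos by (simp add: add_divide_distrib)
  also have "\<dots> \<le> V I T - \<beta> T * \<mu> / 2 * (norm (XB I T - xs))^2 + (\<Sum>k<Suc T. \<beta> k * \<mu> / 2 * (norm (XB I k - xs))^2)"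
    using avg_step by (rule add_right_mono)
  also have "\<dots> = H I T" unfolding H_def by simp
  finally show ?thesis .
qed

definition "V0 = (norm (xs - x0))^2 / 2 + \<beta> 0 * c1 / (2 * \<tau>) * (norm (y0 - ys))^2"

lemma H0: "H I 0 = V0"
  unfolding H_def V_def V0_def Zf_def psi_def Yd_def by (simp add: X0 Y0 S0 Bp_def)

lemma EH: "expect_idx T (\<lambda>I. H I T) \<le> V0"
proof (induction T)
  case 0
  show ?case unfolding H0 expect_const by simp
next
  case (Suc T)
  have "expect_idx (Suc T) (\<lambda>I. H I (Suc T)) = expect_idx T (\<lambda>I. (\<Sum>i\<in>UNIV. H (I(T := i)) (Suc T)) / real CARD('n))"
    by (rule expect_Suc) (rule H_dep, auto)
  also have "\<dots> \<le> expect_idx T (\<lambda>I. H I T)" by (rule expect_mono) (rule H_step)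
  finally show ?case using Suc by simp
qed

lemma V_nonneg: "V I T \<ge> 0"
proof -
  have "Zf I T \<ge> 0" unfolding Zf_def using Z_nonneg by simp
  moreover have "\<beta> T * c1 / (2 * \<tau>) * Yd I T \<ge> 0" unfolding Yd_def using beta_pos[of T] c1_ge tau by simp
  ultimately show ?thesis unfolding V_def by simp
qed

end

context sdapd_loc
begin

lemma final:
  assumes xi: "\<xi> > 1" and T: "T \<ge> 1"
  shows "expect_idx T (\<lambda>I. (norm (sdapd_xhat A f g \<eta> \<tau> \<beta> x0 y0 I T - xs))^2)
     \<le> (2 * V0 * (\<xi> - 1) / (\<mu> * \<eta>)) / (\<xi> ^ T - 1)"
proof -
  have BT: "Bsum \<beta> (T - 1) = Bp T" using T Bsum_Bp[of "T - 1"] by simp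
  have Bp0: "Bp T > 0" using T by (intro Bp_pos) simp
  have BpT: "Bp T = \<eta> * (\<xi> ^ T - 1) / (\<xi> - 1)"
    unfolding Bp_def unfolding beta using xi geometric_sum[of \<xi> T] by (simp add: sum_distrib_left[symmetric])
  have pt: "(norm (sdapd_xhat A f g \<eta> \<tau> \<beta> x0 y0 I T - xs))^2 \<le> (2 / (\<mu> * Bp T)) * H I T" for I
  proof -
    have xh: "sdapd_xhat A f g \<eta> \<tau> \<beta> x0 y0 I T = (1 / (\<Sum>t<T. \<beta> t)) *\<^sub>R (\<Sum>t<T. \<beta> t *\<^sub>R XB I t)"
      unfolding sdapd_xhat_def XB_def BT Bp_def ..
    have "(norm (sdapd_xhat A f g \<eta> \<tau> \<beta> x0 y0 I T - xs))^2
        \<le> (1 / (\<Sum>t<T. \<beta> t)) * (\<Sum>t<T. \<beta> t * (norm (XB I t - xs))^2)"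
      unfolding xh by (rule jensen_sq) (use beta_pos Bp0 less_imp_le in \<open>auto simp: Bp_def\<close>)
    also have "\<dots> = (2 / (\<mu> * Bp T)) * (\<Sum>t<T. \<beta> t * \<mu> / 2 * (norm (XB I t - xs))^2)"
    proof -
      have sd: "(\<Sum>t<T. \<beta> t * \<mu> / 2 * (norm (XB I t - xs))^2) = \<mu> / 2 * (\<Sum>t<T. \<beta> t * (norm (XB I t - xs))^2)"
        by (simp add: sum_distrib_left mult_ac)
      have "\<And>S. 1 / Bp T * S = 2 / (\<mu> * Bp T) * (\<mu> / 2 * S)" using mu Bp0 by (simp add: field_simps)
      thus ?thesis unfolding sd Bp_def .
    qed
    also have "\<dots> \<le> (2 / (\<mu> * Bp T)) * H I T"
      unfolding H_def using V_nonneg[of I T] mu Bp0 by (intro mult_left_mono) auto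
    finally show ?thesis .
  qed
  have "expect_idx T (\<lambda>I. (norm (sdapd_xhat A f g \<eta> \<tau> \<beta> x0 y0 I T - xs))^2)
      \<le> expect_idx T (\<lambda>I. (2 / (\<mu> * Bp T)) * H I T)" by (rule expect_mono) (rule pt)
  also have "\<dots> = (2 / (\<mu> * Bp T)) * expect_idx T (\<lambda>I. H I T)" by (rule expect_scale)
  also have "\<dots> \<le> (2 / (\<mu> * Bp T)) * V0" using EH mu Bp0 by (intro mult_left_mono) auto
  also have "\<dots> = (2 * V0 * (\<xi> - 1) / (\<mu> * \<eta>)) / (\<xi> ^ T - 1)"
  proof -
    have "\<xi> ^ T > 1" using xi T by (simp add: one_less_power)
    thus ?thesis unfolding BpT using xi eta mu by (simp add: field_simps)
  qed
  finally show ?thesis .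
qed

lemma V0_nonneg: "V0 \<ge> 0"
  unfolding V0_def using beta_pos[of 0] c1_ge tau by simp

end

theorem theorem3p5:
  fixes A :: "real^'d^'n::finite"
    and f :: "'n \<Rightarrow> real \<Rightarrow> real"
    and g :: "real^'d \<Rightarrow> ereal"
    and \<gamma> \<mu> :: real
    and x0 xs :: "real^'d" and y0 ys :: "real^'n"
  defines "n \<equiv> real CARD('n)"
  defines "Rb \<equiv> Max (range (\<lambda>i. norm (A $ i)))"
  defines "\<eta> \<equiv> (1 / Rb) * sqrt (\<gamma> / (n * \<mu>))"
  defines "\<tau> \<equiv> (1 / Rb) * sqrt (n * \<mu> / \<gamma>)"
  defines "\<xi> \<equiv> 1 + 1 / (n + Rb * sqrt (n / (\<mu> * \<gamma>)))"
  defines "\<beta> \<equiv> (\<lambda>t::nat. (1 / Rb) * sqrt (\<gamma> / (n * \<mu>)) * \<xi> ^ t)"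
  assumes "\<gamma> > 0" and "\<mu> > 0"
    and "Rb > 0"
    and "\<And>i. convex_on UNIV (f i)"
    and "\<And>i. smooth_with (1 / \<gamma>) (f i)"
    and "closed_proper_fun g"
    and "strongly_convex_ereal \<mu> g"
    and "is_saddle A f g xs ys"
  shows "\<exists>\<Delta>0 \<ge> 0. \<forall>T \<ge> 1.
    expect_idx T (\<lambda>I. norm (sdapd_xhat A f g \<eta> \<tau> \<beta> x0 y0 I T - xs)^2) \<le> \<Delta>0 / (\<xi> ^ T - 1)"
  proof -
  have n0: "n > 0" "n \<ge> 1" unfolding n_def by (simp_all add: Suc_le_eq)
  have gm: "\<gamma> > 0" "\<mu> > 0" "Rb > 0" using assms by auto
  define s where "s = Rb * sqrt (n / (\<mu> * \<gamma>))"
  have s0: "s > 0" unfolding s_def using n0 gm by simp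
  have eta0: "\<eta> > 0" unfolding \<eta>_def using n0 gm by simp
  have tau0: "\<tau> > 0" unfolding \<tau>_def using n0 gm by simp
  have sq1: "sqrt (\<gamma> / (n * \<mu>)) * sqrt (n * \<mu> / \<gamma>) = 1"
    unfolding real_sqrt_mult[symmetric] using n0 gm by simp
  have etR: "\<eta> * \<tau> * Rb^2 = 1"
  proof -
    have "\<eta> * \<tau> * Rb^2 = (sqrt (\<gamma> / (n * \<mu>)) * sqrt (n * \<mu> / \<gamma>)) * (Rb^2 / (Rb * Rb))"
      unfolding \<eta>_def \<tau>_def by (simp add: power2_eq_square)
    thus ?thesis unfolding sq1 using gm by (simp add: power2_eq_square)
  qed
  have smu: "s * (\<mu> * \<eta>) = 1"
  proof -
    have "sqrt (n / (\<mu> * \<gamma>)) * sqrt (\<gamma> / (n * \<mu>)) = sqrt ((1 / \<mu>)^2)"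
      unfolding real_sqrt_mult[symmetric] using n0 gm by (simp add: power2_eq_square field_simps)
    also have "\<dots> = 1 / \<mu>" using gm by simp
    finally have e: "sqrt (n / (\<mu> * \<gamma>)) * sqrt (\<gamma> / (n * \<mu>)) = 1 / \<mu>" .
    have "s * (\<mu> * \<eta>) = \<mu> * (Rb / Rb) * (sqrt (n / (\<mu> * \<gamma>)) * sqrt (\<gamma> / (n * \<mu>)))"
      unfolding s_def \<eta>_def by (simp add: algebra_simps)
    thus ?thesis unfolding e using gm by simp
  qed
  have stg: "s * (\<tau> * \<gamma>) = n"
  proof -
    have "sqrt (n / (\<mu> * \<gamma>)) * sqrt (n * \<mu> / \<gamma>) = sqrt ((n / \<gamma>)^2)"
      unfolding real_sqrt_mult[symmetric] using n0 gm by (simp add: power2_eq_square field_simps)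
    also have "\<dots> = n / \<gamma>" using gm n0 by simp
    finally have e: "sqrt (n / (\<mu> * \<gamma>)) * sqrt (n * \<mu> / \<gamma>) = n / \<gamma>" .
    have "s * (\<tau> * \<gamma>) = \<gamma> * (Rb / Rb) * (sqrt (n / (\<mu> * \<gamma>)) * sqrt (n * \<mu> / \<gamma>))"
      unfolding s_def \<tau>_def by (simp add: algebra_simps)
    thus ?thesis unfolding e using gm by simp
  qed
  have xi_eq: "\<xi> - 1 = 1 / (n + s)" unfolding \<xi>_def s_def by simp
  have "1 / (n + s) > 0" using n0 s0 by simp
  hence xi1: "\<xi> > 1" using xi_eq by linarith
  have xim: "\<xi> - 1 \<le> \<mu> * \<eta>"
  proof -
    have "\<mu> * \<eta> = 1 / s" using smu s0 by (simp add: field_simps)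
    moreover have "1 / (n + s) \<le> 1 / s" using n0 s0 by (simp add: frac_le)
    ultimately show ?thesis using xi_eq by simp
  qed
  have xic: "\<xi> * (1 + \<tau> * \<gamma> * (n - 1) / n) \<le> 1 + \<tau> * \<gamma>"
  proof -
    have tg: "\<tau> * \<gamma> = n / s" using stg s0 by (simp add: field_simps)
    have xi: "\<xi> = (n + s + 1) / (n + s)" using xi_eq n0 s0 by (simp add: field_simps)
    have a: "1 + \<tau> * \<gamma> * (n - 1) / n = (s + n - 1) / s" unfolding tg using n0 s0 by (simp add: field_simps)
    have b: "(n + s + 1) * (s + n - 1) = (n + s)^2 - 1" by (simp add: power2_eq_square algebra_simps)
    have "\<xi> * (1 + \<tau> * \<gamma> * (n - 1) / n) = ((n + s + 1) * (s + n - 1)) / ((n + s) * s)"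
      unfolding xi a by simp
    also have "\<dots> = ((n + s)^2 - 1) / ((n + s) * s)" unfolding b ..
    finally have "\<xi> * (1 + \<tau> * \<gamma> * (n - 1) / n) = ((n + s)^2 - 1) / ((n + s) * s)" .
    also have "\<dots> \<le> (n + s)^2 / ((n + s) * s)" using n0 s0 by (intro divide_right_mono) auto
    also have "\<dots> = (n + s) / s"
    proof -
      have "n + s \<noteq> 0" using n0 s0 by simp
      thus ?thesis unfolding power2_eq_square by (rule nonzero_mult_divide_mult_cancel_left)
    qed
    also have "\<dots> = 1 + \<tau> * \<gamma>" unfolding tg using s0 by (simp add: field_simps)
    finally show ?thesis .
  qed
  have rows: "norm (A $ i) \<le> Rb" for i unfolding Rb_def by (rule Max_ge) auto
  have beta: "\<beta> = (\<lambda>t. \<eta> * \<xi> ^ t)" unfolding \<beta>_def \<eta>_def ..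
  interpret L: sdapd_loc A f g \<gamma> \<mu> \<eta> \<tau> \<xi> Rb \<beta> x0 xs y0 ys
    by (unfold_locales) (use assms eta0 tau0 xi1 rows etR xim xic beta in \<open>auto simp: n_def\<close>)
  show ?thesis
  proof (intro exI[of _ "2 * L.V0 * (\<xi> - 1) / (\<mu> * \<eta>)"] conjI allI impI)
    show "0 \<le> 2 * L.V0 * (\<xi> - 1) / (\<mu> * \<eta>)" using L.V0_nonneg xi1 gm eta0 by simp
    fix T :: nat assume "1 \<le> T"
    thus "expect_idx T (\<lambda>I. (norm (sdapd_xhat A f g \<eta> \<tau> \<beta> x0 y0 I T - xs))^2)
        \<le> 2 * L.V0 * (\<xi> - 1) / (\<mu> * \<eta>) / (\<xi> ^ T - 1)"
      by (rule L.final[OF xi1])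
  qed
qed

end
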